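(* Consider the $T$-stage repeated Bayesian game $\Gamma_T(p,q)$ (setting below). Then $$V_T(p,q)=\max \sum_{l\in L} q^l u_{l,0}$$ where the maximum is over $x\in X_T(p)$, real numbers $u_{l,0}$ ($l\in L$), and real $|A|\times|B|$ matrices $u_{l,h^A,h^B}$ for $l\in L$, $s=1,\dots,T-1$, $h^A\in A^{s-1}$, $h^B\in B^{s-1}$ (with the convention $u_{l,h^A,h^B}=0$ for $h^A\in A^{T-1},h^B\in B^{T-1}$), subject to $$\sum_{k\in K}(M^{kl})^T x_{k,\emptyset,\emptyset}+(u_{l,\emptyset,\emptyset})^T\mathbf 1\ \ge\ u_{l,0}\mathbf 1\quad \forall l\in L,$$ $$\sum_{k\in K}(M^{kl})^T x_{k,(h^A,a),(h^B,b)}+(u_{l,(h^A,a),(h^B,b)})^T\mathbf 1\ \ge\ u^{a,b}_{l,h^A,h^B}\mathbf 1$$ for all $s=1,\dots,T-1$, $l\in L$, $h^A\in A^{s-1}$, $h^B\in B^{s-1}$, $a\in A$, $b\in B$. Moreover, if $x^*$ is the $x$-part of an optimal solution, then the behavior strategy $\sigma^*$ defined by $\sigma_t^{a*}(k,h^A,h^B)=x^{a*}_{k,h^A,h^B}/x^{a'*}_{k,h'^A,h'^B}$, where $h^A=(h'^A,a')$, $h^B=(h'^B,b')$ (and the denominator is $p^k$ when $t=1$), is a security strategy of player 1 in $\Gamma_T(p,q)$. Dually, $$V_T(p,q)=\min \sum_{k\in K} p^k w_{k,0}$$ over $y\in Y_T(q)$, reals $w_{k,0}$ ($k\in K$), and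 real $|A|\times|B|$ matrices $w_{k,h^A,h^B}$ for $k\in K$, $s=1,\dots,T-1$, $h^A\in A^{s-1}$, $h^B\in B^{s-1}$ (with $w_{k,h^A,h^B}=0$ for histories of length $T-1$), subject to $$\sum_{l\in L}M^{kl}y_{l,\emptyset,\emptyset}+w_{k,\emptyset,\emptyset}\mathbf 1\le w_{k,0}\mathbf 1\quad\forall k\in K,$$ $$\sum_{l\in L}M^{kl}y_{l,(h^A,a),(h^B,b)}+w_{k,(h^A,a),(h^B,b)}\mathbf 1\le w^{a,b}_{k,h^A,h^B}\mathbf 1$$ for all $s=1,\dots,T-1$, $k\in K$, $h^A\in A^{s-1}$, $h^B\in B^{s-1}$, $a\in A$, $b\in B$; and if $y^*$ is the $y$-part of an optimal solution, the behavior strategy $\tau^*$ with $\tau_t^{b*}(l,h^A,h^B)=y^{b*}_{l,h^A,h^B}/y^{b'*}_{l,h'^A,h'^B}$ (where $h^A=(h'^A,a')$, $h^B=(h'^B,b')$, denominator $q^l$ when $t=1$) is a security strategy of player 2 in $\Gamma_T(p,q)$.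
   Context: A two-player zero-sum repeated Bayesian game is given by nonempty finite type sets $K$ (player 1) and $L$ (player 2), nonempty finite action sets $A$, $B$, a payoff function $M:K\times L\times A\times B\to\mathbb R$ (write $M^{kl}$ for the $|A|\times|B|$ matrix with entries $M^{kl}_{a,b}=M(k,l,a,b)$), and $p\in\Delta(K)$, $q\in\Delta(L)$ with all entries positive ($\Delta(S)$ = probability distributions on $S$, viewed as vectors; $\mathbf 1$ = all-ones vector). Types $k\sim p$, $l\sim q$ are drawn independently; player 1 privately learns $k$, player 2 privately learns $l$. At each stage $t$ both simultaneously choose $a_t\in A$, $b_t\in B$, which are publicly announced; $h_t^A=(a_1,\dots,a_{t-1})\in A^{t-1}$, $h_t^B=(b_1,\dots,b_{t-1})\in B^{t-1}$ (empty, written $\emptyset$, for $t=1$). A behavior strategy of player 1 is $\sigma=(\sigma_t)$ with $\sigma_t:K\times A^{t-1}\times B^{t-1}\to\Delta(A)$ ($\sigma_t^a$ = probability of $a$); of player 2, $\tau_t:L\times A^{t-1}\times B^{t-1}\to\Delta(B)$. In the $T$-stage game $\Gamma_T(p,q)$ the payoff to player 1 (maximizer; player 2 minimizes) is $\gamma_T(p,q,\sigma,\tau)=\mathbb E_{p,q,\sigma,\tau}[\sum_{t=1}^T M(k,l,a_t,b_t)]$; its value is $V_T(p,q)=\max_\sigma\min_\tau\gamma_T=\min_\tau\max_\sigma\gamma_T$. A security strategy of player 1 (resp. 2) is one attaining $\max_\sigma\min_\tau\gamma_T$ (resp. $\min_\tau\max_\sigma\gamma_T$). Realization plans: $X_T(p)$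 is the set of families $x=(x_{k,h^A,h^B})$, $k\in K$, $t=1,\dots,T$, $h^A\in A^{t-1}$, $h^B\in B^{t-1}$, with $x_{k,h^A,h^B}\in\mathbb R^{|A|}$ (entries $x^a_{k,h^A,h^B}$), such that $x\ge 0$, $\mathbf 1^Tx_{k,\emptyset,\emptyset}=p^k$ and $\mathbf 1^Tx_{k,(h^A,a),(h^B,b)}=x^a_{k,h^A,h^B}$ for all $t\le T-1$, $h^A\in A^{t-1},h^B\in B^{t-1}$, $a\in A$, $b\in B$ ($(h,a)$ = concatenation). The realization plan of $\sigma$ is $x^{a_t}_{k,h_t^A,h_t^B}=p^k\prod_{s=1}^t\sigma_s^{a_s}(k,h_s^A,h_s^B)$, with $h_s^A,h_s^B$ the prefixes of $h_t^A,h_t^B$. $Y_T(q)$ is defined symmetrically with $L$, $B$, $q$, vectors $y_{l,h^A,h^B}\in\mathbb R^{|B|}$ and constraints $\mathbf 1^Ty_{l,\emptyset,\emptyset}=q^l$, $\mathbf 1^Ty_{l,(h^A,a),(h^B,b)}=y^b_{l,h^A,h^B}$, $y\ge0$. *)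

theory Defs
  imports Complex_Main
begin

text \<open>Repeated zero-sum Bayesian game with types 'k (player 1), 'l (player 2) and actions
 'a (player 1), 'b (player 2), all finite (and nonempty, as every HOL type).
 Histories h^A, h^B are lists of actions; at stage t they have length t - 1.
 A behaviour strategy of player 1 is sigma t k hA hB a (probability of a at stage t).\<close>

definition is_distr :: "('x::finite \<Rightarrow> real) \<Rightarrow> bool" where
  "is_distr p \<longleftrightarrow> (\<forall>x. p x \<ge> 0) \<and> sum p UNIV = 1"

definition behav1 :: "nat \<Rightarrow> (nat \<Rightarrow> 'k \<Rightarrow> 'a list \<Rightarrow> 'b list \<Rightarrow> 'a::finite \<Rightarrow> real) set" where
  "behav1 T = {\<sigma>. \<forall>t\<in>{1..T}. \<forall>k hA hB. length hA = t - 1 \<and> length hB = t - 1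
       \<longrightarrow> is_distr (\<sigma> t k hA hB)}"

definition behav2 :: "nat \<Rightarrow> (nat \<Rightarrow> 'l \<Rightarrow> 'a list \<Rightarrow> 'b list \<Rightarrow> 'b::finite \<Rightarrow> real) set" where
  "behav2 T = {\<tau>. \<forall>t\<in>{1..T}. \<forall>l hA hB. length hA = t - 1 \<and> length hB = t - 1
       \<longrightarrow> is_distr (\<tau> t l hA hB)}"

definition gamma ::
  "nat \<Rightarrow> ('k::finite \<Rightarrow> real) \<Rightarrow> ('l::finite \<Rightarrow> real) \<Rightarrow> ('k \<Rightarrow> 'l \<Rightarrow> 'a::finite \<Rightarrow> 'b::finite \<Rightarrow> real)
   \<Rightarrow> (nat \<Rightarrow> 'k \<Rightarrow> 'a list \<Rightarrow> 'b list \<Rightarrow> 'a \<Rightarrow> real)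
   \<Rightarrow> (nat \<Rightarrow> 'l \<Rightarrow> 'a list \<Rightarrow> 'b list \<Rightarrow> 'b \<Rightarrow> real) \<Rightarrow> real" where
  "gamma T p q M \<sigma> \<tau> =
    (\<Sum>k\<in>UNIV. \<Sum>l\<in>UNIV. \<Sum>hA\<in>{h. length h = T}. \<Sum>hB\<in>{h. length h = T}.
       p k * q l *
       (\<Prod>s<T. \<sigma> (Suc s) k (take s hA) (take s hB) (hA ! s)
               * \<tau> (Suc s) l (take s hA) (take s hB) (hB ! s)) *
       (\<Sum>s<T. M k l (hA ! s) (hB ! s)))"

definition val_maxmin where
  "val_maxmin T p q M = (SUP \<sigma>\<in>behav1 T. INF \<tau>\<in>behav2 T. gamma T p q M \<sigma> \<tau>)"

definition val_minmax where
  "val_minmax T p q M = (INF \<tau>\<in>behav2 T. SUP \<sigma>\<in>behav1 T. gamma T p q M \<sigma> \<tau>)"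

definition security1 where
  "security1 T p q M \<sigma> \<longleftrightarrow> \<sigma> \<in> behav1 T \<and>
     (INF \<tau>\<in>behav2 T. gamma T p q M \<sigma> \<tau>) = val_maxmin T p q M"

definition security2 where
  "security2 T p q M \<tau> \<longleftrightarrow> \<tau> \<in> behav2 T \<and>
     (SUP \<sigma>\<in>behav1 T. gamma T p q M \<sigma> \<tau>) = val_minmax T p q M"

definition realX :: "nat \<Rightarrow> ('k \<Rightarrow> real) \<Rightarrow> ('k \<Rightarrow> 'a list \<Rightarrow> 'b list \<Rightarrow> 'a::finite \<Rightarrow> real) \<Rightarrow> bool" where
  "realX T p x \<longleftrightarrow>
     (\<forall>k hA hB a. length hA = length hB \<and> length hA < T \<longrightarrow> x k hA hB a \<ge> 0) \<and>
     (\<forall>k. sum (x k [] []) UNIV = p k) \<and>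
     (\<forall>k hA hB a b. length hA = length hB \<and> length hA + 1 < T \<longrightarrow>
        sum (x k (hA @ [a]) (hB @ [b])) UNIV = x k hA hB a)"

definition realY :: "nat \<Rightarrow> ('l \<Rightarrow> real) \<Rightarrow> ('l \<Rightarrow> 'a list \<Rightarrow> 'b list \<Rightarrow> 'b::finite \<Rightarrow> real) \<Rightarrow> bool" where
  "realY T q y \<longleftrightarrow>
     (\<forall>l hA hB b. length hA = length hB \<and> length hA < T \<longrightarrow> y l hA hB b \<ge> 0) \<and>
     (\<forall>l. sum (y l [] []) UNIV = q l) \<and>
     (\<forall>l hA hB a b. length hA = length hB \<and> length hA + 1 < T \<longrightarrow>
        sum (y l (hA @ [a]) (hB @ [b])) UNIV = y l hA hB b)"

definition conv0 :: "nat \<Rightarrow> ('i \<Rightarrow> 'a list \<Rightarrow> 'b list \<Rightarrow> 'a \<Rightarrow> 'b \<Rightarrow> real)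
   \<Rightarrow> 'i \<Rightarrow> 'a list \<Rightarrow> 'b list \<Rightarrow> 'a \<Rightarrow> 'b \<Rightarrow> real" where
  "conv0 T u i hA hB = (if length hA = T - 1 then (\<lambda>a b. 0) else u i hA hB)"

definition lp1_feasible ::
  "nat \<Rightarrow> ('k::finite \<Rightarrow> real) \<Rightarrow> ('k \<Rightarrow> 'l \<Rightarrow> 'a::finite \<Rightarrow> 'b::finite \<Rightarrow> real)
   \<Rightarrow> ('k \<Rightarrow> 'a list \<Rightarrow> 'b list \<Rightarrow> 'a \<Rightarrow> real) \<Rightarrow> ('l \<Rightarrow> real)
   \<Rightarrow> ('l \<Rightarrow> 'a list \<Rightarrow> 'b list \<Rightarrow> 'a \<Rightarrow> 'b \<Rightarrow> real) \<Rightarrow> bool" where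
  "lp1_feasible T p M x u0 u \<longleftrightarrow> realX T p x \<and>
     (\<forall>l b'. (\<Sum>k\<in>UNIV. \<Sum>a'\<in>UNIV. M k l a' b' * x k [] [] a')
              + (\<Sum>a'\<in>UNIV. conv0 T u l [] [] a' b') \<ge> u0 l) \<and>
     (\<forall>l hA hB a b b'. length hA = length hB \<and> length hA + 1 < T \<longrightarrow>
        (\<Sum>k\<in>UNIV. \<Sum>a'\<in>UNIV. M k l a' b' * x k (hA @ [a]) (hB @ [b]) a')
        + (\<Sum>a'\<in>UNIV. conv0 T u l (hA @ [a]) (hB @ [b]) a' b') \<ge> conv0 T u l hA hB a b)"

definition lp1_obj :: "('l::finite \<Rightarrow> real) \<Rightarrow> ('l \<Rightarrow> real) \<Rightarrow> real" where
  "lp1_obj q u0 = (\<Sum>l\<in>UNIV. q l * u0 l)"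

definition lp2_feasible ::
  "nat \<Rightarrow> ('l::finite \<Rightarrow> real) \<Rightarrow> ('k::finite \<Rightarrow> 'l \<Rightarrow> 'a::finite \<Rightarrow> 'b::finite \<Rightarrow> real)
   \<Rightarrow> ('l \<Rightarrow> 'a list \<Rightarrow> 'b list \<Rightarrow> 'b \<Rightarrow> real) \<Rightarrow> ('k \<Rightarrow> real)
   \<Rightarrow> ('k \<Rightarrow> 'a list \<Rightarrow> 'b list \<Rightarrow> 'a \<Rightarrow> 'b \<Rightarrow> real) \<Rightarrow> bool" where
  "lp2_feasible T q M y w0 w \<longleftrightarrow> realY T q y \<and>
     (\<forall>k a'. (\<Sum>l\<in>UNIV. \<Sum>b'\<in>UNIV. M k l a' b' * y l [] [] b')
              + (\<Sum>b'\<in>UNIV. conv0 T w k [] [] a' b') \<le> w0 k) \<and>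
     (\<forall>k hA hB a b a'. length hA = length hB \<and> length hA + 1 < T \<longrightarrow>
        (\<Sum>l\<in>UNIV. \<Sum>b'\<in>UNIV. M k l a' b' * y l (hA @ [a]) (hB @ [b]) b')
        + (\<Sum>b'\<in>UNIV. conv0 T w k (hA @ [a]) (hB @ [b]) a' b') \<le> conv0 T w k hA hB a b)"

definition lp2_obj :: "('k::finite \<Rightarrow> real) \<Rightarrow> ('k \<Rightarrow> real) \<Rightarrow> real" where
  "lp2_obj p w0 = (\<Sum>k\<in>UNIV. p k * w0 k)"

text \<open>A behaviour strategy induced by a realization plan x: sigma_t^a(k,hA,hB) =
 x^a_{k,hA,hB} / x^{a'}_{k,h'A,h'B} (denominator p^k at t = 1), required wherever the
 denominator is nonzero (elsewhere the ratio is undefined and sigma is arbitrary).\<close>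
definition induced1 where
  "induced1 T p x \<sigma> \<longleftrightarrow>
     (\<forall>k a. \<sigma> 1 k [] [] a = x k [] [] a / p k) \<and>
     (\<forall>k hA hB a' b' a. length hA = length hB \<and> length hA + 1 < T \<and> x k hA hB a' \<noteq> 0 \<longrightarrow>
        \<sigma> (length hA + 2) k (hA @ [a']) (hB @ [b']) a = x k (hA @ [a']) (hB @ [b']) a / x k hA hB a')"

definition induced2 where
  "induced2 T q y \<tau> \<longleftrightarrow>
     (\<forall>l b. \<tau> 1 l [] [] b = y l [] [] b / q l) \<and>
     (\<forall>l hA hB a' b' b. length hA = length hB \<and> length hA + 1 < T \<and> y l hA hB b' \<noteq> 0 \<longrightarrow>
        \<tau> (length hA + 2) l (hA @ [a']) (hB @ [b']) b = y l (hA @ [a']) (hB @ [b']) b / y l hA hB b')"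

end

theory Submission
  imports Defs "HOL-Library.Nat_Bijection"
begin


definition fm_comb :: "(nat \<Rightarrow> 'j \<Rightarrow> real) \<Rightarrow> 'j \<Rightarrow> (nat \<Rightarrow> real) \<Rightarrow> nat \<Rightarrow> real" where
  "fm_comb A j0 c n = (if even n then c (n div 2) else
     (case prod_decode (n div 2) of (i, i') \<Rightarrow> (- A i' j0) * c i + A i j0 * c i'))"

lemma fm_comb_0[simp]: "fm_comb A j0 c (2 * i) = c i"
  by (simp add: fm_comb_def)

lemma fm_comb_1[simp]: "fm_comb A j0 c (2 * prod_encode (i, i') + 1) = (- A i' j0) * c i + A i j0 * c i'"
  by (simp add: fm_comb_def)

lemma fm_comb_1'[simp]: "fm_comb A j0 c (Suc (2 * prod_encode (i, i'))) = (- A i' j0) * c i + A i j0 * c i'"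
  using fm_comb_1 by simp

lemma fm_sum_I':
  fixes g :: "nat \<Rightarrow> real"
  assumes "finite I0" "finite Ip" "finite In"
  shows "(\<Sum>n\<in>(\<lambda>i. 2*i) ` I0 \<union> (\<lambda>(i,i'). 2 * prod_encode (i,i') + 1) ` (Ip \<times> In). g n)
     = (\<Sum>i\<in>I0. g (2*i)) + (\<Sum>(i,i')\<in>Ip \<times> In. g (2 * prod_encode (i,i') + 1))"
proof -
  have inj1: "inj_on (\<lambda>i::nat. 2*i) I0" by (auto simp: inj_on_def)
  have inj2: "inj_on (\<lambda>(i,i'). 2 * prod_encode (i,i') + 1) (Ip \<times> In)"
    by (auto simp: inj_on_def)
  have disj: "(\<lambda>i. 2*i) ` I0 \<inter> (\<lambda>(i,i'). 2 * prod_encode (i,i') + 1) ` (Ip \<times> In) = {}"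
    by (auto, presburger)
  have "(\<Sum>n\<in>(\<lambda>i. 2*i) ` I0 \<union> (\<lambda>(i,i'). 2 * prod_encode (i,i') + 1) ` (Ip \<times> In). g n)
     = (\<Sum>n\<in>(\<lambda>i. 2*i) ` I0. g n) + (\<Sum>n\<in>(\<lambda>(i,i'). 2 * prod_encode (i,i') + 1) ` (Ip \<times> In). g n)"
    by (rule sum.union_disjoint) (use assms disj in auto)
  also have "(\<Sum>n\<in>(\<lambda>i. 2*i) ` I0. g n) = (\<Sum>i\<in>I0. g (2*i))"
    by (subst sum.reindex[OF inj1]) simp
  also have "(\<Sum>n\<in>(\<lambda>(i,i'). 2 * prod_encode (i,i') + 1) ` (Ip \<times> In). g n) = (\<Sum>(i,i')\<in>Ip \<times> In. g (2 * prod_encode (i,i') + 1))"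
    by (subst sum.reindex[OF inj2]) (simp add: case_prod_beta o_def)
  finally show ?thesis .
qed

lemma farkas_nat:
  fixes J :: "'j set"
  assumes "finite J"
  shows "\<And>(I::nat set) (A::nat \<Rightarrow> 'j \<Rightarrow> real) b. finite I \<Longrightarrow> (\<exists>z. \<forall>i\<in>I. (\<Sum>j\<in>J. A i j * z j) \<le> b i) \<or>
     (\<exists>y. (\<forall>i\<in>I. 0 \<le> y i) \<and> (\<forall>j\<in>J. (\<Sum>i\<in>I. y i * A i j) = 0) \<and> (\<Sum>i\<in>I. y i * b i) < 0)"
  using assms
proof (induction J rule: finite_induct)
  case empty
  show ?case
  proof (cases "\<forall>i\<in>I. 0 \<le> b i")
    case True then show ?thesis by auto
  next
    case False
    then obtain i0 where i0: "i0 \<in> I" "b i0 < 0" by (auto simp: not_le)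
    have "(\<Sum>i\<in>I. (if i = i0 then 1 else 0) * b i) = b i0"
    proof -
      have "(\<Sum>i\<in>I. (if i = i0 then 1 else 0) * b i) = (\<Sum>i\<in>I. if i = i0 then b i else 0)"
        by (rule sum.cong) auto
      then show ?thesis using i0 empty.prems by (simp add: sum.delta)
    qed
    then show ?thesis using i0 by (intro disjI2 exI[of _ "\<lambda>i. if i = i0 then 1 else 0"]) auto
  qed
next
  case (insert j0 J)
  let ?Ip = "{i\<in>I. A i j0 > 0}" and ?In = "{i\<in>I. A i j0 < 0}" and ?I0 = "{i\<in>I. A i j0 = 0}"
  define I' where "I' = (\<lambda>i. 2*i) ` ?I0 \<union> (\<lambda>(i,i'). 2 * prod_encode (i,i') + 1) ` (?Ip \<times> ?In)"
  define A' where "A' = (\<lambda>n j. fm_comb A j0 (\<lambda>i. A i j) n)"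
  define b' where "b' = fm_comb A j0 b"
  have fI: "finite ?Ip" "finite ?In" "finite ?I0" using insert.prems by auto
  have fI': "finite I'" unfolding I'_def using fI by auto
  from insert.IH[OF fI', of A' b']
  show ?case
  proof
    assume "\<exists>z. \<forall>i\<in>I'. (\<Sum>j\<in>J. A' i j * z j) \<le> b' i"
    then obtain z' where z': "\<forall>n\<in>I'. (\<Sum>j\<in>J. A' n j * z' j) \<le> b' n" by blast
    define s where "s i = (\<Sum>j\<in>J. A i j * z' j)" for i
    define U where "U i = (b i - s i) / A i j0" for i
    have s_comb: "(\<Sum>j\<in>J. A' n j * z' j) = fm_comb A j0 s n" for n
      unfolding A'_def fm_comb_def s_def
      by (auto simp: sum_distrib_left sum.distrib algebra_simps sum_negf sum_subtractf split: prod.split)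
    have c0: "s i \<le> b i" if "i \<in> ?I0" for i
      using z'[rule_format, of "2*i"] that unfolding s_comb b'_def I'_def by auto
    have cpair: "U i' \<le> U i" if "i \<in> ?Ip" "i' \<in> ?In" for i i'
    proof -
      have "fm_comb A j0 s (2 * prod_encode (i,i') + 1) \<le> b' (2 * prod_encode (i,i') + 1)"
        using z'[rule_format, of "2 * prod_encode (i,i') + 1"] that unfolding s_comb I'_def by auto
      then have h: "(- A i' j0) * s i + A i j0 * s i' \<le> (- A i' j0) * b i + A i j0 * b i'"
        unfolding b'_def by simp
      have "U i' \<le> U i \<longleftrightarrow> (b i' - s i') / A i' j0 \<le> (b i - s i) / A i j0" unfolding U_def by simp
      also have "\<dots> \<longleftrightarrow> (b i' - s i') * A i j0 \<ge> (b i - s i) * A i' j0"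
        using that by (simp add: divide_simps mult.commute)
      finally show ?thesis using h by (simp add: algebra_simps)
    qed
    define z0 where "z0 = (if ?In = {} then (if ?Ip = {} then 0 else Min (U ` ?Ip)) else Max (U ` ?In))"
    have z0p: "z0 \<le> U i" if "i \<in> ?Ip" for i
    proof (cases "?In = {}")
      case True then show ?thesis using that fI unfolding z0_def by auto
    next
      case False
      then have "Max (U ` ?In) \<in> U ` ?In" using fI by (intro Max_in) auto
      then obtain i' where "i' \<in> ?In" "Max (U ` ?In) = U i'" by auto
      then show ?thesis using False cpair[OF that] unfolding z0_def by auto
    qed
    have z0n: "U i \<le> z0" if "i \<in> ?In" for i
      using that fI unfolding z0_def by (auto intro: Max_ge)
    define z where "z = z'(j0 := z0)"
    have sumz: "(\<Sum>j\<in>insert j0 J. A i j * z j) = A i j0 * z0 + s i" for i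
      using insert.hyps unfolding z_def s_def by (auto intro!: sum.cong)
    have "\<forall>i\<in>I. (\<Sum>j\<in>insert j0 J. A i j * z j) \<le> b i"
    proof
      fix i assume i: "i \<in> I"
      consider "A i j0 = 0" | "A i j0 > 0" | "A i j0 < 0" by linarith
      then show "(\<Sum>j\<in>insert j0 J. A i j * z j) \<le> b i"
      proof cases
        case 1 then show ?thesis using c0[of i] i by (simp add: sumz)
      next
        case 2
        then have "z0 \<le> (b i - s i) / A i j0" using z0p[of i] i unfolding U_def by auto
        then have "A i j0 * z0 \<le> b i - s i" using 2 by (simp add: pos_le_divide_eq mult.commute)
        then show ?thesis by (simp add: sumz)
      next
        case 3
        then have "(b i - s i) / A i j0 \<le> z0" using z0n[of i] i unfolding U_def by auto
        then have "A i j0 * z0 \<le> b i - s i" using 3 by (simp add: neg_divide_le_eq mult.commute)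
        then show ?thesis by (simp add: sumz)
      qed
    qed
    then show ?thesis by blast
  next
    assume "\<exists>y. (\<forall>i\<in>I'. 0 \<le> y i) \<and> (\<forall>j\<in>J. (\<Sum>i\<in>I'. y i * A' i j) = 0) \<and> (\<Sum>i\<in>I'. y i * b' i) < 0"
    then obtain y' where y'0: "\<forall>n\<in>I'. 0 \<le> y' n" and y'A: "\<forall>j\<in>J. (\<Sum>n\<in>I'. y' n * A' n j) = 0"
      and y'b: "(\<Sum>n\<in>I'. y' n * b' n) < 0" by blast
    define y where "y i = (if A i j0 = 0 then y' (2*i) else if A i j0 > 0 then
        (\<Sum>i'\<in>?In. y' (2 * prod_encode (i,i') + 1) * (- A i' j0))
      else (\<Sum>i''\<in>?Ip. y' (2 * prod_encode (i'',i) + 1) * A i'' j0))" for i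
    have key: "(\<Sum>i\<in>I. y i * c i) = (\<Sum>n\<in>I'. y' n * fm_comb A j0 c n)" for c
    proof -
      have part: "I = ?I0 \<union> (?Ip \<union> ?In)" by auto
      have "(\<Sum>i\<in>I. y i * c i) = (\<Sum>i\<in>?I0. y i * c i) + ((\<Sum>i\<in>?Ip. y i * c i) + (\<Sum>i\<in>?In. y i * c i))"
        apply (subst part)
        apply (subst sum.union_disjoint, use fI in auto)
        apply (subst sum.union_disjoint, use fI in auto)
        done
      also have "(\<Sum>i\<in>?I0. y i * c i) = (\<Sum>i\<in>?I0. y' (2*i) * c i)"
        by (rule sum.cong) (auto simp: y_def)
      also have "(\<Sum>i\<in>?Ip. y i * c i) = (\<Sum>(i,i')\<in>?Ip \<times> ?In. y' (2 * prod_encode (i,i') + 1) * (- A i' j0) * c i)"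
        by (subst sum.cartesian_product[symmetric]) (auto simp: y_def sum_distrib_right intro!: sum.cong)
      also have "(\<Sum>i\<in>?In. y i * c i) = (\<Sum>(i,i')\<in>?Ip \<times> ?In. y' (2 * prod_encode (i,i') + 1) * A i j0 * c i')"
        apply (subst sum.cartesian_product[symmetric])
        apply (subst sum.swap)
        apply (auto simp: y_def sum_distrib_right intro!: sum.cong)
        done
      finally have "(\<Sum>i\<in>I. y i * c i) = (\<Sum>i\<in>?I0. y' (2*i) * c i) +
          (\<Sum>(i,i')\<in>?Ip \<times> ?In. y' (2 * prod_encode (i,i') + 1) * ((- A i' j0) * c i + A i j0 * c i'))"
        by (simp add: sum.distrib[symmetric] case_prod_beta algebra_simps)
      also have "\<dots> = (\<Sum>n\<in>I'. y' n * fm_comb A j0 c n)"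
        unfolding I'_def by (subst fm_sum_I') (use fI in \<open>auto simp: case_prod_beta\<close>)
      finally show ?thesis .
    qed
    have "\<forall>i\<in>I. 0 \<le> y i"
    proof
      fix i assume i: "i \<in> I"
      have a: "0 \<le> y' (2*i)" if "A i j0 = 0" using y'0 i that unfolding I'_def by auto
      have b: "0 \<le> y' (2 * prod_encode (i,i') + 1) * (- A i' j0)" if "A i j0 > 0" "i' \<in> ?In" for i'
        using y'0 i that unfolding I'_def by (intro mult_nonneg_nonneg) auto
      have c: "0 \<le> y' (2 * prod_encode (i'',i) + 1) * A i'' j0" if "A i j0 < 0" "i'' \<in> ?Ip" for i''
        using y'0 i that unfolding I'_def by (intro mult_nonneg_nonneg) auto
      show "0 \<le> y i" unfolding y_def using a b c by (auto intro!: sum_nonneg)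
    qed
    moreover have "\<forall>j\<in>insert j0 J. (\<Sum>i\<in>I. y i * A i j) = 0"
    proof
      fix j assume "j \<in> insert j0 J"
      then consider "j = j0" | "j \<in> J" by auto
      then show "(\<Sum>i\<in>I. y i * A i j) = 0"
      proof cases
        case 1
        have "(\<Sum>n\<in>I'. y' n * fm_comb A j0 (\<lambda>i. A i j0) n) = 0"
          unfolding I'_def by (subst fm_sum_I') (use fI in auto)
        then show ?thesis using key[of "\<lambda>i. A i j0"] 1 by simp
      next
        case 2 then show ?thesis using key[of "\<lambda>i. A i j"] y'A unfolding A'_def by simp
      qed
    qed
    moreover have "(\<Sum>i\<in>I. y i * b i) < 0" using key[of b] y'b unfolding b'_def by simp
    ultimately show ?thesis by blast
  qed
qed


lemma farkas:
  fixes A :: "'i \<Rightarrow> 'j \<Rightarrow> real" and b :: "'i \<Rightarrow> real"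
  assumes "finite I" "finite J"
  shows "(\<exists>z. \<forall>i\<in>I. (\<Sum>j\<in>J. A i j * z j) \<le> b i) \<or>
     (\<exists>y. (\<forall>i\<in>I. 0 \<le> y i) \<and> (\<forall>j\<in>J. (\<Sum>i\<in>I. y i * A i j) = 0) \<and> (\<Sum>i\<in>I. y i * b i) < 0)"
proof -
  obtain h where h: "bij_betw h {0..<card I} I" using ex_bij_betw_nat_finite[OF assms(1)] by blast
  let ?I' = "{0..<card I}"
  have re: "(\<Sum>n\<in>?I'. g (h n)) = (\<Sum>i\<in>I. g i)" for g :: "'i \<Rightarrow> real"
    using sum.reindex_bij_betw[OF h] .
  from farkas_nat[OF assms(2) finite_atLeastLessThan[of 0 "card I"], where A="\<lambda>n. A (h n)" and b="\<lambda>n. b (h n)"]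
  show ?thesis
  proof
    assume "\<exists>z. \<forall>n\<in>?I'. (\<Sum>j\<in>J. A (h n) j * z j) \<le> b (h n)"
    then obtain z where z: "\<forall>n\<in>?I'. (\<Sum>j\<in>J. A (h n) j * z j) \<le> b (h n)" by blast
    have "\<forall>i\<in>I. (\<Sum>j\<in>J. A i j * z j) \<le> b i"
    proof
      fix i assume "i \<in> I"
      then have "i \<in> h ` ?I'" using h by (simp add: bij_betw_def)
      then obtain n where "n \<in> ?I'" "i = h n" by blast
      then show "(\<Sum>j\<in>J. A i j * z j) \<le> b i" using z by auto
    qed
    then show ?thesis by blast
  next
    assume "\<exists>y. (\<forall>n\<in>?I'. 0 \<le> y n) \<and> (\<forall>j\<in>J. (\<Sum>n\<in>?I'. y n * A (h n) j) = 0) \<and> (\<Sum>n\<in>?I'. y n * b (h n)) < 0"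
    then obtain y where y0: "\<forall>n\<in>?I'. 0 \<le> y n" and yA: "\<forall>j\<in>J. (\<Sum>n\<in>?I'. y n * A (h n) j) = 0"
      and yb: "(\<Sum>n\<in>?I'. y n * b (h n)) < 0" by blast
    define y' where "y' = (\<lambda>i. y (inv_into ?I' h i))"
    have hinj: "inj_on h ?I'" using h bij_betw_def by blast
    have y'h: "y' (h n) = y n" if "n \<in> ?I'" for n
      unfolding y'_def using inv_into_f_f[OF hinj that] by simp
    have key: "(\<Sum>i\<in>I. y' i * c i) = (\<Sum>n\<in>?I'. y n * c (h n))" for c
    proof -
      have "(\<Sum>i\<in>I. y' i * c i) = (\<Sum>n\<in>?I'. y' (h n) * c (h n))" using re[of "\<lambda>i. y' i * c i"] by simp
      also have "\<dots> = (\<Sum>n\<in>?I'. y n * c (h n))" by (rule sum.cong) (auto simp: y'h)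
      finally show ?thesis .
    qed
    have "\<forall>i\<in>I. 0 \<le> y' i"
    proof
      fix i assume "i \<in> I"
      then have "i \<in> h ` ?I'" using h by (simp add: bij_betw_def)
      then obtain n where "n \<in> ?I'" "i = h n" by blast
      then show "0 \<le> y' i" using y0 y'h by auto
    qed
    moreover have "\<forall>j\<in>J. (\<Sum>i\<in>I. y' i * A i j) = 0" using yA key by simp
    moreover have "(\<Sum>i\<in>I. y' i * b i) < 0" using yb key by simp
    ultimately show ?thesis by blast
  qed
qed

fun mm_A :: "('p \<Rightarrow> 'q \<Rightarrow> real) \<Rightarrow> (('p + 'q) \<times> bool) + unit \<Rightarrow> 'p + 'q \<Rightarrow> real" where
  "mm_A A (Inl (Inl p, True)) j = (if j = Inl p then -1 else 0)"
| "mm_A A (Inl (Inl p, False)) j = (case j of Inl _ \<Rightarrow> 0 | Inr q \<Rightarrow> A p q)"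
| "mm_A A (Inl (Inr q, True)) j = (if j = Inr q then -1 else 0)"
| "mm_A A (Inl (Inr q, False)) j = (case j of Inl p \<Rightarrow> - A p q | Inr _ \<Rightarrow> 0)"
| "mm_A A (Inr u) j = (case j of Inl _ \<Rightarrow> 1 | Inr _ \<Rightarrow> -1)"

fun mm_b :: "(('p + 'q) \<times> bool) + unit \<Rightarrow> real" where
  "mm_b (Inl (Inl p, True)) = 0"
| "mm_b (Inl (Inl p, False)) = 1"
| "mm_b (Inl (Inr q, True)) = 0"
| "mm_b (Inl (Inr q, False)) = -1"
| "mm_b (Inr u) = 0"

lemma sum_if_eq_mult:
  assumes "finite P" "p \<in> P"
  shows "(\<Sum>x\<in>P. (if x = p then c else 0) * f x) = c * (f p :: real)"
proof -
  have "(\<Sum>x\<in>P. (if x = p then c else 0) * f x) = (\<Sum>x\<in>P. if x = p then c * f x else 0)"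
    by (rule sum.cong) auto
  then show ?thesis using assms by (simp add: sum.delta)
qed

lemma sum_mmJ:
  assumes "finite P" "finite Q"
  shows "(\<Sum>j\<in>P <+> Q. g j) = (\<Sum>p\<in>P. g (Inl p)) + (\<Sum>q\<in>Q. g (Inr q))"
  using sum.Plus[OF assms, of g] by (simp add: o_def)

lemma sum_mmI:
  assumes "finite P" "finite Q"
  shows "(\<Sum>i\<in>((P <+> Q) \<times> UNIV) <+> {()}. g i) =
    (\<Sum>p\<in>P. g (Inl (Inl p, True)) + g (Inl (Inl p, False))) +
    (\<Sum>q\<in>Q. g (Inl (Inr q, True)) + g (Inl (Inr q, False))) + g (Inr ())"
proof -
  have f: "finite ((P <+> Q) \<times> (UNIV :: bool set))" using assms by auto
  have "(\<Sum>i\<in>((P <+> Q) \<times> UNIV) <+> {()}. g i) = (\<Sum>c\<in>(P <+> Q) \<times> UNIV. g (Inl c)) + g (Inr ())"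
    using sum.Plus[OF f, of "{()}" g] by (simp add: o_def)
  also have "(\<Sum>c\<in>(P <+> Q) \<times> UNIV. g (Inl c)) = (\<Sum>j\<in>P <+> Q. \<Sum>bb\<in>UNIV. g (Inl (j, bb)))"
    by (subst sum.cartesian_product) simp
  also have "\<dots> = (\<Sum>j\<in>P <+> Q. g (Inl (j, True)) + g (Inl (j, False)))"
    by (auto simp: UNIV_bool add.commute intro!: sum.cong)
  also have "\<dots> = (\<Sum>p\<in>P. g (Inl (Inl p, True)) + g (Inl (Inl p, False))) +
    (\<Sum>q\<in>Q. g (Inl (Inr q, True)) + g (Inl (Inr q, False)))"
    by (rule sum_mmJ[OF assms])
  finally show ?thesis .
qed

lemma minimax_pos:
  fixes A :: "'p \<Rightarrow> 'q \<Rightarrow> real"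
  assumes fP: "finite P" and nP: "P \<noteq> {}" and fQ: "finite Q" and nQ: "Q \<noteq> {}"
    and pos: "\<forall>p\<in>P. \<forall>q\<in>Q. A p q > 0"
  shows "\<exists>lam mu v. (\<forall>p\<in>P. 0 \<le> lam p) \<and> sum lam P = 1 \<and> (\<forall>q\<in>Q. 0 \<le> mu q) \<and> sum mu Q = 1 \<and>
     (\<forall>q\<in>Q. v \<le> (\<Sum>p\<in>P. lam p * A p q)) \<and> (\<forall>p\<in>P. (\<Sum>q\<in>Q. A p q * mu q) \<le> v)"
proof -
  let ?I = "((P <+> Q) \<times> (UNIV::bool set)) <+> {()}"
  have fI: "finite ?I" using fP fQ by auto
  have fJ: "finite (P <+> Q)" using fP fQ by auto
  from farkas[OF fI fJ, of "mm_A A" mm_b]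
  show ?thesis
  proof
    assume "\<exists>z. \<forall>i\<in>?I. (\<Sum>j\<in>P <+> Q. mm_A A i j * z j) \<le> mm_b i"
    then obtain z where z: "\<forall>i\<in>?I. (\<Sum>j\<in>P <+> Q. mm_A A i j * z j) \<le> mm_b i" by blast
    define l where "l p = z (Inl p)" for p
    define m where "m q = z (Inr q)" for q
    have l0: "0 \<le> l p" if "p \<in> P" for p
    proof -
      have "(\<Sum>j\<in>P <+> Q. mm_A A (Inl (Inl p, True)) j * z j) \<le> 0" using z[rule_format, of "Inl (Inl p, True)"] that by force
      moreover have "(\<Sum>j\<in>P <+> Q. mm_A A (Inl (Inl p, True)) j * z j) = - l p"
        using that fP fQ by (simp add: sum_mmJ l_def sum_if_eq_mult)
      ultimately show ?thesis by simp
    qed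
    have m0: "0 \<le> m q" if "q \<in> Q" for q
    proof -
      have "(\<Sum>j\<in>P <+> Q. mm_A A (Inl (Inr q, True)) j * z j) \<le> 0" using z[rule_format, of "Inl (Inr q, True)"] that by force
      moreover have "(\<Sum>j\<in>P <+> Q. mm_A A (Inl (Inr q, True)) j * z j) = - m q"
        using that fP fQ by (simp add: sum_mmJ m_def sum_if_eq_mult)
      ultimately show ?thesis by simp
    qed
    have rowp: "(\<Sum>q\<in>Q. A p q * m q) \<le> 1" if "p \<in> P" for p
    proof -
      have "(\<Sum>j\<in>P <+> Q. mm_A A (Inl (Inl p, False)) j * z j) \<le> 1" using z[rule_format, of "Inl (Inl p, False)"] that by force
      then show ?thesis using fP fQ by (simp add: sum_mmJ m_def)
    qed
    have colq: "1 \<le> (\<Sum>p\<in>P. l p * A p q)" if "q \<in> Q" for q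
    proof -
      have "(\<Sum>j\<in>P <+> Q. mm_A A (Inl (Inr q, False)) j * z j) \<le> -1" using z[rule_format, of "Inl (Inr q, False)"] that by force
      then show ?thesis using fP fQ by (simp add: sum_mmJ l_def sum_negf mult.commute)
    qed
    have sums: "sum l P \<le> sum m Q"
    proof -
      have "(\<Sum>j\<in>P <+> Q. mm_A A (Inr ()) j * z j) \<le> 0" using z[rule_format, of "Inr ()"] by force
      then show ?thesis using fP fQ by (simp add: sum_mmJ l_def m_def sum_negf)
    qed
    define D where "D = (\<Sum>p\<in>P. \<Sum>q\<in>Q. l p * A p q * m q)"
    have D1: "D \<le> sum l P"
    proof -
      have "D = (\<Sum>p\<in>P. l p * (\<Sum>q\<in>Q. A p q * m q))"
        unfolding D_def by (simp add: sum_distrib_left mult.assoc)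
      also have "\<dots> \<le> (\<Sum>p\<in>P. l p * 1)"
        by (rule sum_mono) (use rowp l0 in \<open>auto intro: mult_left_mono simp del: mult_1_right\<close>)
      finally show ?thesis by simp
    qed
    have D2: "sum m Q \<le> D"
    proof -
      have "(\<Sum>q\<in>Q. m q * 1) \<le> (\<Sum>q\<in>Q. m q * (\<Sum>p\<in>P. l p * A p q))"
        by (rule sum_mono) (use colq m0 in \<open>auto intro: mult_left_mono simp del: mult_1_right\<close>)
      also have "\<dots> = D" unfolding D_def
        by (subst sum.swap) (simp add: sum_distrib_left mult.commute mult.left_commute)
      finally show ?thesis by simp
    qed
    have seq: "sum l P = sum m Q" using D1 D2 sums by simp
    obtain q0 where q0: "q0 \<in> Q" using nQ by blast
    have spos: "sum l P > 0"
    proof (rule ccontr)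
      assume "\<not> sum l P > 0"
      then have "sum l P = 0" using sum_nonneg[of P l] l0 by force
      then have "\<forall>p\<in>P. l p = 0" using sum_nonneg_eq_0_iff[OF fP] l0 by blast
      then show False using colq[OF q0] by simp
    qed
    define s where "s = sum l P"
    show ?thesis
    proof (intro exI conjI ballI)
      show "0 \<le> l p / s" if "p \<in> P" for p using l0[OF that] spos s_def by simp
      show "0 \<le> m q / s" if "q \<in> Q" for q using m0[OF that] spos s_def by simp
      show "(\<Sum>p\<in>P. l p / s) = 1" using spos s_def by (simp add: sum_divide_distrib[symmetric])
      show "(\<Sum>q\<in>Q. m q / s) = 1" using spos s_def seq by (simp add: sum_divide_distrib[symmetric])
      show "1 / s \<le> (\<Sum>p\<in>P. l p / s * A p q)" if "q \<in> Q" for q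
      proof -
        have "(\<Sum>p\<in>P. l p / s * A p q) = (\<Sum>p\<in>P. l p * A p q) / s" by (simp add: sum_divide_distrib)
        then show ?thesis using colq[OF that] spos s_def by (simp add: divide_right_mono)
      qed
      show "(\<Sum>q\<in>Q. A p q * (m q / s)) \<le> 1 / s" if "p \<in> P" for p
      proof -
        have "(\<Sum>q\<in>Q. A p q * (m q / s)) = (\<Sum>q\<in>Q. A p q * m q) / s" by (simp add: sum_divide_distrib)
        then show ?thesis using rowp[OF that] spos s_def by (simp add: divide_right_mono)
      qed
    qed
  next
    assume "\<exists>y. (\<forall>i\<in>?I. 0 \<le> y i) \<and> (\<forall>j\<in>P <+> Q. (\<Sum>i\<in>?I. y i * mm_A A i j) = 0) \<and> (\<Sum>i\<in>?I. y i * mm_b i) < 0"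
    then obtain y where y0: "\<forall>i\<in>?I. 0 \<le> y i" and yA: "\<forall>j\<in>P <+> Q. (\<Sum>i\<in>?I. y i * mm_A A i j) = 0"
      and yb: "(\<Sum>i\<in>?I. y i * mm_b i) < 0" by blast
    define al where "al p = y (Inl (Inl p, True))" for p
    define de where "de p = y (Inl (Inl p, False))" for p
    define be where "be q = y (Inl (Inr q, True))" for q
    define ga where "ga q = y (Inl (Inr q, False))" for q
    define ep where "ep = y (Inr ())"
    have al0: "0 \<le> al p" if "p \<in> P" for p using y0 that unfolding al_def by auto
    have de0: "0 \<le> de p" if "p \<in> P" for p using y0 that unfolding de_def by auto
    have be0: "0 \<le> be q" if "q \<in> Q" for q using y0 that unfolding be_def by auto
    have ga0: "0 \<le> ga q" if "q \<in> Q" for q using y0 that unfolding ga_def by auto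
    have R1: "(\<Sum>q\<in>Q. A p q * ga q) \<le> ep" if "p \<in> P" for p
    proof -
      have "(\<Sum>i\<in>?I. y i * mm_A A i (Inl p)) = 0" using yA that by auto
      then have "- al p - (\<Sum>q\<in>Q. ga q * A p q) + ep = 0"
        using that fP fQ by (simp add: sum_mmI al_def ga_def ep_def if_distrib[of "\<lambda>x. _ * x"] sum.If_cases sum_negf)
      then show ?thesis using al0[OF that] by (simp add: mult.commute)
    qed
    have R2: "ep \<le> (\<Sum>p\<in>P. de p * A p q)" if "q \<in> Q" for q
    proof -
      have "(\<Sum>i\<in>?I. y i * mm_A A i (Inr q)) = 0" using yA that by auto
      then have "(\<Sum>p\<in>P. de p * A p q) - be q - ep = 0"
        using that fP fQ by (simp add: sum_mmI de_def be_def ep_def if_distrib[of "\<lambda>x. _ * x"] sum.If_cases)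
      then show ?thesis using be0[OF that] by simp
    qed
    have Rb: "sum de P < sum ga Q"
      using yb fP fQ by (simp add: sum_mmI de_def ga_def sum_negf)
    define D where "D = (\<Sum>p\<in>P. \<Sum>q\<in>Q. de p * A p q * ga q)"
    have D1: "D \<le> ep * sum de P"
    proof -
      have "D = (\<Sum>p\<in>P. de p * (\<Sum>q\<in>Q. A p q * ga q))"
        unfolding D_def by (simp add: sum_distrib_left mult.assoc)
      also have "\<dots> \<le> (\<Sum>p\<in>P. de p * ep)"
        by (rule sum_mono) (use R1 de0 in \<open>auto intro: mult_left_mono\<close>)
      finally show ?thesis by (simp add: sum_distrib_left mult.commute)
    qed
    have D2: "ep * sum ga Q \<le> D"
    proof -
      have "(\<Sum>q\<in>Q. ga q * ep) \<le> (\<Sum>q\<in>Q. ga q * (\<Sum>p\<in>P. de p * A p q))"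
        by (rule sum_mono) (use R2 ga0 in \<open>auto intro: mult_left_mono\<close>)
      also have "\<dots> = D" unfolding D_def
        by (subst sum.swap) (simp add: sum_distrib_left mult.commute mult.left_commute)
      finally show ?thesis by (simp add: sum_distrib_left mult.commute)
    qed
    show ?thesis
    proof (cases "ep > 0")
      case True
      have "ep * sum ga Q \<le> ep * sum de P" using D1 D2 by simp
      then have "sum ga Q \<le> sum de P" using True by (simp add: mult_le_cancel_left_pos)
      then show ?thesis using Rb by simp
    next
      case False
      have "0 \<le> sum de P" using de0 by (simp add: sum_nonneg)
      then have "sum ga Q > 0" using Rb by simp
      then have gsp: "sum ga Q > 0" .
      have "\<exists>q1\<in>Q. ga q1 > 0"
      proof (rule ccontr)
        assume "\<not> (\<exists>q1\<in>Q. ga q1 > 0)"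
        then have "\<forall>q\<in>Q. ga q = 0" using ga0 by force
        then have "sum ga Q = 0" by simp
        then show False using gsp by simp
      qed
      then obtain q1 where q1: "q1 \<in> Q" "ga q1 > 0" by blast
      obtain p0 where p0: "p0 \<in> P" using nP by blast
      have "0 < (\<Sum>q\<in>Q. A p0 q * ga q)"
        by (rule sum_pos2[OF fQ q1(1)]) (use pos p0 q1 ga0 in \<open>auto intro: mult_nonneg_nonneg less_imp_le\<close>)
      then show ?thesis using R1[OF p0] False by simp
    qed
  qed
qed

lemma minimax_matrix:
  fixes A :: "'p \<Rightarrow> 'q \<Rightarrow> real"
  assumes fP: "finite P" and nP: "P \<noteq> {}" and fQ: "finite Q" and nQ: "Q \<noteq> {}"
  shows "\<exists>lam mu v. (\<forall>p\<in>P. 0 \<le> lam p) \<and> sum lam P = 1 \<and> (\<forall>q\<in>Q. 0 \<le> mu q) \<and> sum mu Q = 1 \<and>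
     (\<forall>q\<in>Q. v \<le> (\<Sum>p\<in>P. lam p * A p q)) \<and> (\<forall>p\<in>P. (\<Sum>q\<in>Q. A p q * mu q) \<le> v)"
proof -
  define m where "m = Min ((\<lambda>(p,q). A p q) ` (P \<times> Q))"
  have mle: "m \<le> A p q" if "p \<in> P" "q \<in> Q" for p q
    unfolding m_def using fP fQ that by (intro Min_le) auto
  define A' where "A' p q = A p q - m + 1" for p q
  have "\<forall>p\<in>P. \<forall>q\<in>Q. A' p q > 0" using mle unfolding A'_def by force
  from minimax_pos[OF fP nP fQ nQ this] obtain lam mu v where
    h: "\<forall>p\<in>P. 0 \<le> lam p" "sum lam P = 1" "\<forall>q\<in>Q. 0 \<le> mu q" "sum mu Q = 1"
       "\<forall>q\<in>Q. v \<le> (\<Sum>p\<in>P. lam p * A' p q)" "\<forall>p\<in>P. (\<Sum>q\<in>Q. A' p q * mu q) \<le> v" by blast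
  have e1: "(\<Sum>p\<in>P. lam p * A' p q) = (\<Sum>p\<in>P. lam p * A p q) + (1 - m)" for q
  proof -
    have "(\<Sum>p\<in>P. lam p * A' p q) = (\<Sum>p\<in>P. lam p * A p q + (1 - m) * lam p)"
      by (rule sum.cong) (auto simp: A'_def algebra_simps)
    then show ?thesis using h(2) by (simp add: sum.distrib sum_distrib_left[symmetric])
  qed
  have e2: "(\<Sum>q\<in>Q. A' p q * mu q) = (\<Sum>q\<in>Q. A p q * mu q) + (1 - m)" for p
  proof -
    have "(\<Sum>q\<in>Q. A' p q * mu q) = (\<Sum>q\<in>Q. A p q * mu q + (1 - m) * mu q)"
      by (rule sum.cong) (auto simp: A'_def algebra_simps)
    then show ?thesis using h(4) by (simp add: sum.distrib sum_distrib_left[symmetric])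
  qed
  show ?thesis
    by (rule exI[of _ lam], rule exI[of _ mu], rule exI[of _ "v - (1 - m)"]) (use h e1 e2 in auto)
qed




lemma realY_nonneg: "realY T q y \<Longrightarrow> length hA = length hB \<Longrightarrow> length hA < T \<Longrightarrow> 0 \<le> y l hA hB b"
  unfolding realY_def by blast
lemma realX_nonneg: "realX T p x \<Longrightarrow> length hA = length hB \<Longrightarrow> length hA < T \<Longrightarrow> 0 \<le> x k hA hB a"
  unfolding realX_def by blast

lemma finite_len_eq: "finite {h :: ('x::finite) list. length h = t}"
  using finite_lists_length_eq[of "UNIV :: 'x set" t] by simp

lemma sum_len_Suc:
  fixes f :: "('x::finite) list \<Rightarrow> real"
  shows "(\<Sum>h\<in>{h. length h = Suc n}. f h) = (\<Sum>h\<in>{h. length h = n}. \<Sum>a\<in>UNIV. f (h @ [a]))"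
proof -
  have e: "{h :: 'x list. length h = Suc n} = (\<lambda>(h,a). h @ [a]) ` ({h. length h = n} \<times> UNIV)"
  proof
    show "{h :: 'x list. length h = Suc n} \<subseteq> (\<lambda>(h,a). h @ [a]) ` ({h. length h = n} \<times> UNIV)"
    proof
      fix h :: "'x list" assume "h \<in> {h. length h = Suc n}"
      then have "length h = Suc n" by simp
      then obtain h' a where "h = h' @ [a]" by (metis length_Suc_conv_rev)
      with \<open>length h = Suc n\<close> show "h \<in> (\<lambda>(h,a). h @ [a]) ` ({h. length h = n} \<times> UNIV)" by force
    qed
  qed auto
  have inj: "inj_on (\<lambda>(h,a). h @ [a]) ({h :: 'x list. length h = n} \<times> UNIV)"
    by (auto simp: inj_on_def)
  have c: "(\<Sum>h\<in>{h :: 'x list. length h = n}. \<Sum>a\<in>UNIV. f (h @ [a])) = (\<Sum>(h,a)\<in>{h. length h = n} \<times> UNIV. f (h @ [a]))"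
    by (rule sum.cartesian_product)
  have "(\<Sum>h\<in>{h. length h = Suc n}. f h) = (\<Sum>x\<in>{h. length h = n} \<times> UNIV. f ((\<lambda>(h,a). h @ [a]) x))"
    unfolding e by (rule sum.reindex[OF inj, unfolded o_def])
  also have "\<dots> = (\<Sum>(h,a)\<in>{h. length h = n} \<times> UNIV. f (h @ [a]))"
    by (simp add: case_prod_beta)
  finally show ?thesis using c by simp
qed

lemma sum_len_0: "(\<Sum>h\<in>{h. length h = 0}. f h) = f []"
  by simp


definition HS :: "nat \<Rightarrow> (('a::finite) list \<Rightarrow> ('b::finite) list \<Rightarrow> real) \<Rightarrow> real" where
  "HS t f = (\<Sum>hA\<in>{h. length h = t}. \<Sum>hB\<in>{h. length h = t}. f hA hB)"

lemma HS_cong: "(\<And>h h'. length h = t \<Longrightarrow> length h' = t \<Longrightarrow> f h h' = g h h') \<Longrightarrow> HS t f = HS t g"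
  unfolding HS_def by (auto intro!: sum.cong)

lemma HS_diff: "HS t (\<lambda>h h'. f h h' - g h h') = HS t f - HS t g"
  unfolding HS_def by (simp add: sum_subtractf)

lemma HS_add: "HS t (\<lambda>h h'. f h h' + g h h') = HS t f + HS t g"
  unfolding HS_def by (simp add: sum.distrib)

lemma HS_sum: "HS t (\<lambda>h h'. \<Sum>i\<in>I. f i h h') = (\<Sum>i\<in>I. HS t (f i))"
proof -
  have "(\<Sum>h\<in>{h. length h = t}. \<Sum>h'\<in>{h. length h = t}. \<Sum>i\<in>I. f i h h') =
        (\<Sum>h\<in>{h. length h = t}. \<Sum>i\<in>I. \<Sum>h'\<in>{h. length h = t}. f i h h')"
    by (rule sum.cong[OF refl], rule sum.swap)
  also have "\<dots> = (\<Sum>i\<in>I. \<Sum>h\<in>{h. length h = t}. \<Sum>h'\<in>{h. length h = t}. f i h h')"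
    by (rule sum.swap)
  finally show ?thesis unfolding HS_def .
qed

lemma HS_mult: "HS t (\<lambda>h h'. c * f h h') = c * HS t f"
  unfolding HS_def by (simp add: sum_distrib_left)

lemma HS_0: "HS 0 f = f [] []"
  unfolding HS_def by simp

lemma HS_Suc: "HS (Suc n) f = HS n (\<lambda>h h'. \<Sum>a\<in>UNIV. \<Sum>b\<in>UNIV. f (h @ [a]) (h' @ [b]))"
proof -
  have "HS (Suc n) f = (\<Sum>h\<in>{h. length h = n}. \<Sum>a\<in>UNIV. \<Sum>h'\<in>{h. length h = n}. \<Sum>b\<in>UNIV. f (h @ [a]) (h' @ [b]))"
    unfolding HS_def by (simp add: sum_len_Suc)
  also have "\<dots> = (\<Sum>h\<in>{h. length h = n}. \<Sum>h'\<in>{h. length h = n}. \<Sum>a\<in>UNIV. \<Sum>b\<in>UNIV. f (h @ [a]) (h' @ [b]))"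
    by (rule sum.cong[OF refl], rule sum.swap)
  finally show ?thesis unfolding HS_def .
qed

definition Gst :: "('k::finite \<Rightarrow> 'l::finite \<Rightarrow> 'a::finite \<Rightarrow> 'b::finite \<Rightarrow> real)
   \<Rightarrow> ('k \<Rightarrow> 'a list \<Rightarrow> 'b list \<Rightarrow> 'a \<Rightarrow> real) \<Rightarrow> ('l \<Rightarrow> 'a list \<Rightarrow> 'b list \<Rightarrow> 'b \<Rightarrow> real)
   \<Rightarrow> 'a list \<Rightarrow> 'b list \<Rightarrow> real" where
  "Gst M x y hA hB = (\<Sum>k\<in>UNIV. \<Sum>l\<in>UNIV. \<Sum>a\<in>UNIV. \<Sum>b\<in>UNIV. M k l a b * x k hA hB a * y l hA hB b)"

definition G :: "nat \<Rightarrow> ('k::finite \<Rightarrow> 'l::finite \<Rightarrow> 'a::finite \<Rightarrow> 'b::finite \<Rightarrow> real)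
   \<Rightarrow> ('k \<Rightarrow> 'a list \<Rightarrow> 'b list \<Rightarrow> 'a \<Rightarrow> real) \<Rightarrow> ('l \<Rightarrow> 'a list \<Rightarrow> 'b list \<Rightarrow> 'b \<Rightarrow> real) \<Rightarrow> real" where
  "G T M x y = (\<Sum>t<T. HS t (Gst M x y))"

definition L1 where
  "L1 T M x u l hA hB b' = (\<Sum>k\<in>UNIV. \<Sum>a'\<in>UNIV. M k l a' b' * x k hA hB a') + (\<Sum>a'\<in>UNIV. conv0 T u l hA hB a' b')"

definition R1 where
  "R1 T uz u l hA hB = (if hA = [] then uz l else conv0 T u l (butlast hA) (butlast hB) (last hA) (last hB))"

definition slack1 where
  "slack1 T M x uz u y = (\<Sum>t<T. HS t (\<lambda>hA hB. \<Sum>l\<in>UNIV. \<Sum>b'\<in>UNIV. y l hA hB b' * (L1 T M x u l hA hB b' - R1 T uz u l hA hB)))"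

definition L2 where
  "L2 T M y w k hA hB a' = (\<Sum>l\<in>UNIV. \<Sum>b'\<in>UNIV. M k l a' b' * y l hA hB b') + (\<Sum>b'\<in>UNIV. conv0 T w k hA hB a' b')"

definition R2 where
  "R2 T wz w k hA hB = (if hA = [] then wz k else conv0 T w k (butlast hA) (butlast hB) (last hA) (last hB))"

definition slack2 where
  "slack2 T M y wz w x = (\<Sum>t<T. HS t (\<lambda>hA hB. \<Sum>k\<in>UNIV. \<Sum>a'\<in>UNIV. x k hA hB a' * (R2 T wz w k hA hB - L2 T M y w k hA hB a')))"

lemma sum_swap4:
  "(\<Sum>l\<in>A. \<Sum>b\<in>B. \<Sum>k\<in>C. \<Sum>a\<in>D. f l b k a) = (\<Sum>k\<in>C. \<Sum>l\<in>A. \<Sum>a\<in>D. \<Sum>b\<in>B. (f l b k a :: real))"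
proof -
  have "(\<Sum>l\<in>A. \<Sum>b\<in>B. \<Sum>k\<in>C. \<Sum>a\<in>D. f l b k a) = (\<Sum>l\<in>A. \<Sum>k\<in>C. \<Sum>b\<in>B. \<Sum>a\<in>D. f l b k a)"
    by (rule sum.cong[OF refl], rule sum.swap)
  also have "\<dots> = (\<Sum>l\<in>A. \<Sum>k\<in>C. \<Sum>a\<in>D. \<Sum>b\<in>B. f l b k a)"
    by (rule sum.cong[OF refl], rule sum.cong[OF refl], rule sum.swap)
  also have "\<dots> = (\<Sum>k\<in>C. \<Sum>l\<in>A. \<Sum>a\<in>D. \<Sum>b\<in>B. f l b k a)"
    by (rule sum.swap)
  finally show ?thesis .
qed

lemma lp1_identity:
  fixes M :: "'k::finite \<Rightarrow> 'l::finite \<Rightarrow> 'a::finite \<Rightarrow> 'b::finite \<Rightarrow> real"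
  assumes Y: "realY T q y" and T: "T \<ge> 1"
  shows "G T M x y = lp1_obj q uz + slack1 T M x uz u y"
proof -
  define EE where "EE t = HS t (\<lambda>hA hB. \<Sum>l\<in>UNIV. \<Sum>b'\<in>UNIV. y l hA hB b' * (\<Sum>a'\<in>UNIV. conv0 T u l hA hB a' b'))" for t
  define FF where "FF t = HS t (\<lambda>hA hB. \<Sum>l\<in>UNIV. \<Sum>b'\<in>UNIV. y l hA hB b' * R1 T uz u l hA hB)" for t
  have part1: "HS t (\<lambda>hA hB. \<Sum>l\<in>UNIV. \<Sum>b'\<in>UNIV. y l hA hB b' * L1 T M x u l hA hB b') = HS t (Gst M x y) + EE t" for t
  proof -
    have "(\<Sum>l\<in>UNIV. \<Sum>b'\<in>UNIV. y l hA hB b' * L1 T M x u l hA hB b') =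
      Gst M x y hA hB + (\<Sum>l\<in>UNIV. \<Sum>b'\<in>UNIV. y l hA hB b' * (\<Sum>a'\<in>UNIV. conv0 T u l hA hB a' b'))" for hA hB
    proof -
      have "(\<Sum>l\<in>UNIV. \<Sum>b'\<in>UNIV. y l hA hB b' * (\<Sum>k\<in>UNIV. \<Sum>a'\<in>UNIV. M k l a' b' * x k hA hB a'))
          = (\<Sum>l\<in>UNIV. \<Sum>b'\<in>UNIV. \<Sum>k\<in>UNIV. \<Sum>a'\<in>UNIV. M k l a' b' * x k hA hB a' * y l hA hB b')"
        by (simp add: sum_distrib_left mult.commute mult.left_commute)
      also have "\<dots> = Gst M x y hA hB" unfolding Gst_def by (rule sum_swap4)
      finally show ?thesis unfolding L1_def by (simp add: distrib_left sum.distrib)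
    qed
    then show ?thesis unfolding EE_def by (simp add: HS_add)
  qed
  have FF0: "FF 0 = lp1_obj q uz"
  proof -
    have "FF 0 = (\<Sum>l\<in>UNIV. (\<Sum>b'\<in>UNIV. y l [] [] b') * uz l)"
      unfolding FF_def HS_0 R1_def by (simp add: sum_distrib_right)
    also have "\<dots> = lp1_obj q uz" using Y unfolding realY_def lp1_obj_def by simp
    finally show ?thesis .
  qed
  have FFS: "FF (Suc s) = EE s" if "Suc s < T" for s
  proof -
    have "FF (Suc s) = HS s (\<lambda>h h'. \<Sum>a\<in>UNIV. \<Sum>b\<in>UNIV. \<Sum>l\<in>UNIV. \<Sum>b'\<in>UNIV. y l (h @ [a]) (h' @ [b]) b' * conv0 T u l h h' a b)"
      unfolding FF_def HS_Suc R1_def by simp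
    also have "\<dots> = HS s (\<lambda>h h'. \<Sum>a\<in>UNIV. \<Sum>b\<in>UNIV. \<Sum>l\<in>UNIV. y l h h' b * conv0 T u l h h' a b)"
    proof (rule HS_cong)
      fix h :: "'a list" and h' :: "'b list" assume "length h = s" "length h' = s"
      then have yy: "(\<Sum>b'\<in>UNIV. y l (h @ [a]) (h' @ [b]) b') = y l h h' b" for l a b
        using Y that unfolding realY_def by auto
      show "(\<Sum>a\<in>UNIV. \<Sum>b\<in>UNIV. \<Sum>l\<in>UNIV. \<Sum>b'\<in>UNIV. y l (h @ [a]) (h' @ [b]) b' * conv0 T u l h h' a b) =
            (\<Sum>a\<in>UNIV. \<Sum>b\<in>UNIV. \<Sum>l\<in>UNIV. y l h h' b * conv0 T u l h h' a b)"
        by (simp add: sum_distrib_right[symmetric] yy)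
    qed
    also have "\<dots> = EE s"
      unfolding EE_def
    proof (rule HS_cong)
      fix h :: "'a list" and h' :: "'b list"
      have "(\<Sum>l\<in>UNIV. \<Sum>b'\<in>UNIV. y l h h' b' * (\<Sum>a'\<in>UNIV. conv0 T u l h h' a' b'))
         = (\<Sum>l\<in>UNIV. \<Sum>b'\<in>UNIV. \<Sum>a'\<in>UNIV. y l h h' b' * conv0 T u l h h' a' b')"
        by (simp add: sum_distrib_left)
      also have "\<dots> = (\<Sum>l\<in>UNIV. \<Sum>a'\<in>UNIV. \<Sum>b'\<in>UNIV. y l h h' b' * conv0 T u l h h' a' b')"
        by (rule sum.cong[OF refl], rule sum.swap)
      also have "\<dots> = (\<Sum>a'\<in>UNIV. \<Sum>l\<in>UNIV. \<Sum>b'\<in>UNIV. y l h h' b' * conv0 T u l h h' a' b')"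
        by (rule sum.swap)
      also have "\<dots> = (\<Sum>a\<in>UNIV. \<Sum>b\<in>UNIV. \<Sum>l\<in>UNIV. y l h h' b * conv0 T u l h h' a b)"
        by (rule sum.cong[OF refl], rule sum.swap)
      finally show "(\<Sum>a\<in>UNIV. \<Sum>b\<in>UNIV. \<Sum>l\<in>UNIV. y l h h' b * conv0 T u l h h' a b) =
         (\<Sum>l\<in>UNIV. \<Sum>b'\<in>UNIV. y l h h' b' * (\<Sum>a'\<in>UNIV. conv0 T u l h h' a' b'))" by simp
    qed
    finally show ?thesis .
  qed
  obtain n where n: "T = Suc n" using T by (cases T) auto
  have EEn: "EE n = 0"
    unfolding EE_def by (rule trans[OF HS_cong[where g="\<lambda>_ _. 0"]]) (auto simp: conv0_def n HS_def)
  have "slack1 T M x uz u y = (\<Sum>t<T. HS t (Gst M x y) + EE t - FF t)"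
    unfolding slack1_def
    by (rule sum.cong[OF refl]) (simp add: right_diff_distrib sum_subtractf HS_diff part1 FF_def[symmetric])
  also have "\<dots> = G T M x y + (\<Sum>t<T. EE t) - (\<Sum>t<T. FF t)"
    unfolding G_def by (simp add: sum.distrib sum_subtractf)
  also have "(\<Sum>t<T. FF t) = lp1_obj q uz + (\<Sum>s<n. EE s)"
    unfolding n sum.lessThan_Suc_shift using FFS n FF0 by simp
  also have "(\<Sum>t<T. EE t) = (\<Sum>s<n. EE s)"
    unfolding n using EEn by simp
  finally show ?thesis by simp
qed


lemma lp2_identity:
  fixes M :: "'k::finite \<Rightarrow> 'l::finite \<Rightarrow> 'a::finite \<Rightarrow> 'b::finite \<Rightarrow> real"
  assumes X: "realX T p x" and T: "T \<ge> 1"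
  shows "G T M x y = lp2_obj p wz - slack2 T M y wz w x"
proof -
  define EE where "EE t = HS t (\<lambda>hA hB. \<Sum>k\<in>UNIV. \<Sum>a'\<in>UNIV. x k hA hB a' * (\<Sum>b'\<in>UNIV. conv0 T w k hA hB a' b'))" for t
  define FF where "FF t = HS t (\<lambda>hA hB. \<Sum>k\<in>UNIV. \<Sum>a'\<in>UNIV. x k hA hB a' * R2 T wz w k hA hB)" for t
  have part1: "HS t (\<lambda>hA hB. \<Sum>k\<in>UNIV. \<Sum>a'\<in>UNIV. x k hA hB a' * L2 T M y w k hA hB a') = HS t (Gst M x y) + EE t" for t
  proof -
    have "(\<Sum>k\<in>UNIV. \<Sum>a'\<in>UNIV. x k hA hB a' * L2 T M y w k hA hB a') =
      Gst M x y hA hB + (\<Sum>k\<in>UNIV. \<Sum>a'\<in>UNIV. x k hA hB a' * (\<Sum>b'\<in>UNIV. conv0 T w k hA hB a' b'))" for hA hB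
    proof -
      have "(\<Sum>k\<in>UNIV. \<Sum>a'\<in>UNIV. x k hA hB a' * (\<Sum>l\<in>UNIV. \<Sum>b'\<in>UNIV. M k l a' b' * y l hA hB b'))
          = (\<Sum>k\<in>UNIV. \<Sum>a'\<in>UNIV. \<Sum>l\<in>UNIV. \<Sum>b'\<in>UNIV. M k l a' b' * x k hA hB a' * y l hA hB b')"
        by (simp add: sum_distrib_left mult.commute mult.left_commute)
      also have "\<dots> = Gst M x y hA hB" unfolding Gst_def
        by (rule sum.cong[OF refl], rule sum.swap)
      finally show ?thesis unfolding L2_def by (simp add: distrib_left sum.distrib)
    qed
    then show ?thesis unfolding EE_def by (simp add: HS_add)
  qed
  have FF0: "FF 0 = lp2_obj p wz"
  proof -
    have "FF 0 = (\<Sum>k\<in>UNIV. (\<Sum>a'\<in>UNIV. x k [] [] a') * wz k)"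
      unfolding FF_def HS_0 R2_def by (simp add: sum_distrib_right)
    also have "\<dots> = lp2_obj p wz" using X unfolding realX_def lp2_obj_def by simp
    finally show ?thesis .
  qed
  have FFS: "FF (Suc s) = EE s" if "Suc s < T" for s
  proof -
    have "FF (Suc s) = HS s (\<lambda>h h'. \<Sum>a\<in>UNIV. \<Sum>b\<in>UNIV. \<Sum>k\<in>UNIV. \<Sum>a'\<in>UNIV. x k (h @ [a]) (h' @ [b]) a' * conv0 T w k h h' a b)"
      unfolding FF_def HS_Suc R2_def by simp
    also have "\<dots> = HS s (\<lambda>h h'. \<Sum>a\<in>UNIV. \<Sum>b\<in>UNIV. \<Sum>k\<in>UNIV. x k h h' a * conv0 T w k h h' a b)"
    proof (rule HS_cong)
      fix h :: "'a list" and h' :: "'b list" assume "length h = s" "length h' = s"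
      then have xx: "(\<Sum>a'\<in>UNIV. x k (h @ [a]) (h' @ [b]) a') = x k h h' a" for k a b
        using X that unfolding realX_def by auto
      show "(\<Sum>a\<in>UNIV. \<Sum>b\<in>UNIV. \<Sum>k\<in>UNIV. \<Sum>a'\<in>UNIV. x k (h @ [a]) (h' @ [b]) a' * conv0 T w k h h' a b) =
            (\<Sum>a\<in>UNIV. \<Sum>b\<in>UNIV. \<Sum>k\<in>UNIV. x k h h' a * conv0 T w k h h' a b)"
        by (simp add: sum_distrib_right[symmetric] xx)
    qed
    also have "\<dots> = EE s"
      unfolding EE_def
    proof (rule HS_cong)
      fix h :: "'a list" and h' :: "'b list"
      have "(\<Sum>k\<in>UNIV. \<Sum>a'\<in>UNIV. x k h h' a' * (\<Sum>b'\<in>UNIV. conv0 T w k h h' a' b'))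
         = (\<Sum>k\<in>UNIV. \<Sum>a'\<in>UNIV. \<Sum>b'\<in>UNIV. x k h h' a' * conv0 T w k h h' a' b')"
        by (simp add: sum_distrib_left)
      also have "\<dots> = (\<Sum>a'\<in>UNIV. \<Sum>k\<in>UNIV. \<Sum>b'\<in>UNIV. x k h h' a' * conv0 T w k h h' a' b')"
        by (rule sum.swap)
      also have "\<dots> = (\<Sum>a\<in>UNIV. \<Sum>b\<in>UNIV. \<Sum>k\<in>UNIV. x k h h' a * conv0 T w k h h' a b)"
        by (rule sum.cong[OF refl], rule sum.swap)
      finally show "(\<Sum>a\<in>UNIV. \<Sum>b\<in>UNIV. \<Sum>k\<in>UNIV. x k h h' a * conv0 T w k h h' a b) =
         (\<Sum>k\<in>UNIV. \<Sum>a'\<in>UNIV. x k h h' a' * (\<Sum>b'\<in>UNIV. conv0 T w k h h' a' b'))" by simp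
    qed
    finally show ?thesis .
  qed
  obtain n where n: "T = Suc n" using T by (cases T) auto
  have EEn: "EE n = 0"
    unfolding EE_def by (rule trans[OF HS_cong[where g="\<lambda>_ _. 0"]]) (auto simp: conv0_def n HS_def)
  have "slack2 T M y wz w x = (\<Sum>t<T. FF t - HS t (Gst M x y) - EE t)"
    unfolding slack2_def
    by (rule sum.cong[OF refl]) (simp add: right_diff_distrib sum_subtractf HS_diff part1 FF_def[symmetric])
  also have "\<dots> = (\<Sum>t<T. FF t) - G T M x y - (\<Sum>t<T. EE t)"
    unfolding G_def by (simp add: sum.distrib sum_subtractf)
  also have "(\<Sum>t<T. FF t) = lp2_obj p wz + (\<Sum>s<n. EE s)"
    unfolding n sum.lessThan_Suc_shift using FFS n FF0 by simp
  also have "(\<Sum>t<T. EE t) = (\<Sum>s<n. EE s)"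
    unfolding n using EEn by simp
  finally show ?thesis by linarith
qed

lemma slack1_nonneg:
  fixes x :: "'k::finite \<Rightarrow> 'a::finite list \<Rightarrow> 'b::finite list \<Rightarrow> 'a \<Rightarrow> real"
    and y :: "'l::finite \<Rightarrow> 'a list \<Rightarrow> 'b list \<Rightarrow> 'b \<Rightarrow> real"
  assumes F: "lp1_feasible T p M x uz u" and Y: "realY T q y"
  shows "slack1 T M x uz u y \<ge> 0"
  unfolding slack1_def
proof (intro sum_nonneg)
  fix t assume t: "t \<in> {..<T}"
  show "0 \<le> HS t (\<lambda>hA hB. \<Sum>l\<in>UNIV. \<Sum>b'\<in>UNIV. y l hA hB b' * (L1 T M x u l hA hB b' - R1 T uz u l hA hB))"
    unfolding HS_def
  proof (intro sum_nonneg mult_nonneg_nonneg)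
    fix hA :: "'a list" and hB :: "'b list" and l b'
    assume hA: "hA \<in> {h. length h = t}" and hB: "hB \<in> {h. length h = t}"
    show "0 \<le> y l hA hB b'" using realY_nonneg[OF Y] hA hB t by simp
    show "0 \<le> L1 T M x u l hA hB b' - R1 T uz u l hA hB"
    proof (cases t)
      case 0
      then have e: "hA = []" "hB = []" using hA hB by auto
      have "uz l \<le> (\<Sum>k\<in>UNIV. \<Sum>a'\<in>UNIV. M k l a' b' * x k [] [] a') + (\<Sum>a'\<in>UNIV. conv0 T u l [] [] a' b')"
        using F[unfolded lp1_feasible_def, THEN conjunct2, THEN conjunct1, rule_format, where l=l and b'=b'] .
      then show ?thesis unfolding L1_def R1_def e by simp
    next
      case (Suc s)
      obtain h a where ha: "hA = h @ [a]" using hA Suc by (cases hA rule: rev_cases) auto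
      obtain h' b where hb: "hB = h' @ [b]" using hB Suc by (cases hB rule: rev_cases) auto
      have lh: "length h = length h' \<and> length h + 1 < T" using hA hB ha hb Suc t by auto
      have "conv0 T u l h h' a b \<le> (\<Sum>k\<in>UNIV. \<Sum>a'\<in>UNIV. M k l a' b' * x k (h @ [a]) (h' @ [b]) a')
        + (\<Sum>a'\<in>UNIV. conv0 T u l (h @ [a]) (h' @ [b]) a' b')"
        using F[unfolded lp1_feasible_def, THEN conjunct2, THEN conjunct2, rule_format, where l=l and hA=h and hB=h' and a=a and b=b and b'=b'] lh by blast
      then show ?thesis unfolding L1_def R1_def ha hb by simp
    qed
  qed
qed

lemma slack2_nonneg:
  fixes x :: "'k::finite \<Rightarrow> 'a::finite list \<Rightarrow> 'b::finite list \<Rightarrow> 'a \<Rightarrow> real"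
    and y :: "'l::finite \<Rightarrow> 'a list \<Rightarrow> 'b list \<Rightarrow> 'b \<Rightarrow> real"
  assumes F: "lp2_feasible T q M y wz w" and X: "realX T p x"
  shows "slack2 T M y wz w x \<ge> 0"
  unfolding slack2_def
proof (intro sum_nonneg)
  fix t assume t: "t \<in> {..<T}"
  show "0 \<le> HS t (\<lambda>hA hB. \<Sum>k\<in>UNIV. \<Sum>a'\<in>UNIV. x k hA hB a' * (R2 T wz w k hA hB - L2 T M y w k hA hB a'))"
    unfolding HS_def
  proof (intro sum_nonneg mult_nonneg_nonneg)
    fix hA :: "'a list" and hB :: "'b list" and k a'
    assume hA: "hA \<in> {h. length h = t}" and hB: "hB \<in> {h. length h = t}"
    show "0 \<le> x k hA hB a'" using realX_nonneg[OF X] hA hB t by simp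
    show "0 \<le> R2 T wz w k hA hB - L2 T M y w k hA hB a'"
    proof (cases t)
      case 0
      then have e: "hA = []" "hB = []" using hA hB by auto
      have "(\<Sum>l\<in>UNIV. \<Sum>b'\<in>UNIV. M k l a' b' * y l [] [] b') + (\<Sum>b'\<in>UNIV. conv0 T w k [] [] a' b') \<le> wz k"
        using F[unfolded lp2_feasible_def, THEN conjunct2, THEN conjunct1, rule_format, where k=k and a'=a'] .
      then show ?thesis unfolding L2_def R2_def e by simp
    next
      case (Suc s)
      obtain h a where ha: "hA = h @ [a]" using hA Suc by (cases hA rule: rev_cases) auto
      obtain h' b where hb: "hB = h' @ [b]" using hB Suc by (cases hB rule: rev_cases) auto
      have lh: "length h = length h' \<and> length h + 1 < T" using hA hB ha hb Suc t by auto
      have "(\<Sum>l\<in>UNIV. \<Sum>b'\<in>UNIV. M k l a' b' * y l (h @ [a]) (h' @ [b]) b')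
        + (\<Sum>b'\<in>UNIV. conv0 T w k (h @ [a]) (h' @ [b]) a' b') \<le> conv0 T w k h h' a b"
        using F[unfolded lp2_feasible_def, THEN conjunct2, THEN conjunct2, rule_format, where k=k and hA=h and hB=h' and a=a and b=b and a'=a'] lh by blast
      then show ?thesis unfolding L2_def R2_def ha hb by simp
    qed
  qed
qed

lemma weak1:
  assumes "lp1_feasible T p M x uz u" "realY T q y" "T \<ge> 1"
  shows "lp1_obj q uz \<le> G T M x y"
  using lp1_identity[OF assms(2,3), of M x uz u] slack1_nonneg[OF assms(1,2)] by simp

lemma weak2:
  assumes "lp2_feasible T q M y wz w" "realX T p x" "T \<ge> 1"
  shows "G T M x y \<le> lp2_obj p wz"
  using lp2_identity[OF assms(2,3), of M y wz w] slack2_nonneg[OF assms(1,2)] by simp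




primrec Cn :: "('k::finite \<Rightarrow> 'l \<Rightarrow> 'a::finite \<Rightarrow> 'b::finite \<Rightarrow> real) \<Rightarrow> ('k \<Rightarrow> 'a list \<Rightarrow> 'b list \<Rightarrow> 'a \<Rightarrow> real)
   \<Rightarrow> nat \<Rightarrow> 'l \<Rightarrow> 'a list \<Rightarrow> 'b list \<Rightarrow> real" where
  "Cn M x 0 l hA hB = 0"
| "Cn M x (Suc n) l hA hB = Min (range (\<lambda>b'. (\<Sum>k\<in>UNIV. \<Sum>a'\<in>UNIV. M k l a' b' * x k hA hB a')
      + (\<Sum>a'\<in>UNIV. Cn M x n l (hA @ [a']) (hB @ [b']))))"

definition "Cv T M x l hA hB = Cn M x (T - length hA) l hA hB"

definition "E1 T M x l hA hB b' = (\<Sum>k\<in>UNIV. \<Sum>a'\<in>UNIV. M k l a' b' * x k hA hB a')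
      + (\<Sum>a'\<in>UNIV. Cv T M x l (hA @ [a']) (hB @ [b']))"

lemma Cv_step: "length hA < T \<Longrightarrow> Cv T M x l hA hB = Min (range (E1 T M x l hA hB))"
proof -
  assume h: "length hA < T"
  then have e: "T - length hA = Suc (T - length hA - 1)" by simp
  have e2: "T - length (hA @ [a']) = T - length hA - 1" for a' :: 'a by simp
  show ?thesis unfolding Cv_def E1_def by (subst e) (simp only: Cn.simps e2)
qed

lemma Cv_end: "length hA \<ge> T \<Longrightarrow> Cv T M x l hA hB = 0"
  unfolding Cv_def by simp

lemma E1_ge: "length hA < T \<Longrightarrow> Cv T M x l hA hB \<le> E1 T M x l hA hB b'"
  by (simp add: Cv_step)

definition "bstar1 T M x l hA hB = (SOME b'. E1 T M x l hA hB b' = Cv T M x l hA hB)"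

lemma bstar1: "length hA < T \<Longrightarrow> E1 T M x l hA hB (bstar1 T M x l hA hB) = Cv T M x l hA hB"
proof -
  assume h: "length hA < T"
  have "Min (range (E1 T M x l hA hB)) \<in> range (E1 T M x l hA hB)" by (rule Min_in) auto
  then obtain b' where "Min (range (E1 T M x l hA hB)) = E1 T M x l hA hB b'" by (blast elim: rangeE)
  then have "\<exists>b'. E1 T M x l hA hB b' = Cv T M x l hA hB" using h by (auto simp: Cv_step)
  then show ?thesis unfolding bstar1_def by (rule someI_ex)
qed

definition "uBR T M x = (\<lambda>l hA hB a b. Cv T M x l (hA @ [a]) (hB @ [b]))"
definition "u0BR T M x = (\<lambda>l. Cv T M x l [] [])"

lemma conv0_uBR: "length hA < T \<Longrightarrow> conv0 T (uBR T M x) l hA hB a b = Cv T M x l (hA @ [a]) (hB @ [b])"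
  by (auto simp: conv0_def uBR_def Cv_end)

lemma L1_BR: "length hA < T \<Longrightarrow> L1 T M x (uBR T M x) l hA hB b' = E1 T M x l hA hB b'"
  by (simp add: L1_def E1_def conv0_uBR)

lemma R1_BR: "length hA = length hB \<Longrightarrow> length hA < T \<Longrightarrow> R1 T (u0BR T M x) (uBR T M x) l hA hB = Cv T M x l hA hB"
proof (cases hA rule: rev_cases)
  case Nil
  assume "length hA = length hB" then show ?thesis using Nil by (simp add: R1_def u0BR_def)
next
  case (snoc h a)
  assume l: "length hA = length hB" "length hA < T"
  then obtain h' b where hb: "hB = h' @ [b]" using snoc by (cases hB rule: rev_cases) auto
  show ?thesis using l snoc hb by (simp add: R1_def conv0_uBR)
qed

lemma BR1_feasible:
  assumes X: "realX T p x" and T: "T \<ge> 1"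
  shows "lp1_feasible T p M x (u0BR T M x) (uBR T M x)"
proof -
  have root: "(\<Sum>k\<in>UNIV. \<Sum>a'\<in>UNIV. M k l a' b' * x k [] [] a') + (\<Sum>a'\<in>UNIV. conv0 T (uBR T M x) l [] [] a' b') \<ge> u0BR T M x l"
    if "T \<ge> 1" for l b'
    using E1_ge[of "[]" T M x l "[]" b'] L1_BR[of "[]" T M x l "[]" b'] that unfolding L1_def u0BR_def by simp
  have step: "(\<Sum>k\<in>UNIV. \<Sum>a'\<in>UNIV. M k l a' b' * x k (hA @ [a]) (hB @ [b]) a')
        + (\<Sum>a'\<in>UNIV. conv0 T (uBR T M x) l (hA @ [a]) (hB @ [b]) a' b') \<ge> conv0 T (uBR T M x) l hA hB a b"
    if "length hA = length hB \<and> length hA + 1 < T" for l hA hB a b b'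
  proof -
    have "length (hA @ [a]) < T" using that by simp
    from E1_ge[OF this, of M x l "hB @ [b]" b'] L1_BR[OF this, of M x l "hB @ [b]" b']
    show ?thesis using conv0_uBR[of hA T M x l hB a b] that unfolding L1_def by simp
  qed
  show ?thesis unfolding lp1_feasible_def using X root[OF T] step by blast
qed

definition "onpath1 T M x l hA hB = (\<forall>s<length hB. hB ! s = bstar1 T M x l (take s hA) (take s hB))"

lemma onpath1_snoc: "length h = length h' \<Longrightarrow>
   onpath1 T M x l (h @ [a]) (h' @ [b]) = (onpath1 T M x l h h' \<and> b = bstar1 T M x l h h')"
  unfolding onpath1_def by (auto simp: nth_append less_Suc_eq)

definition "yBR T q M x l hA hB b = (if length hA = length hB \<and> length hA < T \<and> onpath1 T M x l hA hB
   \<and> b = bstar1 T M x l hA hB then q l else 0)"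

lemma sum_if_eq: "(\<Sum>b\<in>(UNIV::'b::finite set). if P \<and> b = c then (v::real) else 0) = (if P then v else 0)"
  by (cases P) (simp_all add: sum.delta)

lemma yBR_realY:
  fixes M :: "'k::finite \<Rightarrow> 'l::finite \<Rightarrow> 'a::finite \<Rightarrow> 'b::finite \<Rightarrow> real"
    and x :: "'k \<Rightarrow> 'a list \<Rightarrow> 'b list \<Rightarrow> 'a \<Rightarrow> real"
  assumes q: "\<forall>l. q l > 0" and T: "T \<ge> 1"
  shows "realY T q (yBR T q M x)"
  unfolding realY_def
proof (intro conjI allI impI)
  fix l hA hB b show "0 \<le> yBR T q M x l hA hB b" using q by (simp add: yBR_def less_imp_le)
next
  fix l show "sum (yBR T q M x l [] []) UNIV = q l"
    using T unfolding yBR_def by (simp add: onpath1_def sum_if_eq[where P=True, simplified])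
next
  fix l and hA :: "'a list" and hB :: "'b list" and a b
  assume h: "length hA = length hB \<and> length hA + 1 < T"
  have "sum (yBR T q M x l (hA @ [a]) (hB @ [b])) UNIV =
     (if onpath1 T M x l (hA @ [a]) (hB @ [b]) then q l else 0)"
    unfolding yBR_def using h by (simp add: sum_if_eq[of "onpath1 T M x l (hA @ [a]) (hB @ [b])"])
  also have "\<dots> = yBR T q M x l hA hB b" using h by (simp add: onpath1_snoc yBR_def)
  finally show "sum (yBR T q M x l (hA @ [a]) (hB @ [b])) UNIV = yBR T q M x l hA hB b" .
qed

lemma BR1_value:
  fixes M :: "'k::finite \<Rightarrow> 'l::finite \<Rightarrow> 'a::finite \<Rightarrow> 'b::finite \<Rightarrow> real"
    and x :: "'k \<Rightarrow> 'a list \<Rightarrow> 'b list \<Rightarrow> 'a \<Rightarrow> real"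
  assumes q: "\<forall>l. q l > 0" and T: "T \<ge> 1"
  shows "G T M x (yBR T q M x) = lp1_obj q (u0BR T M x)"
proof -
  have "slack1 T M x (u0BR T M x) (uBR T M x) (yBR T q M x) = 0"
    unfolding slack1_def
  proof (rule sum.neutral, rule ballI)
    fix t assume t: "t \<in> {..<T}"
    show "HS t (\<lambda>hA hB. \<Sum>l\<in>UNIV. \<Sum>b'\<in>UNIV. yBR T q M x l hA hB b' *
       (L1 T M x (uBR T M x) l hA hB b' - R1 T (u0BR T M x) (uBR T M x) l hA hB)) = 0"
      unfolding HS_def
    proof (intro sum.neutral ballI)
      fix hA :: "'a list" and hB :: "'b list" and l b'
      assume "hA \<in> {h. length h = t}" "hB \<in> {h. length h = t}"
      then have lh: "length hA = length hB" "length hA < T" using t by auto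
      show "yBR T q M x l hA hB b' * (L1 T M x (uBR T M x) l hA hB b' - R1 T (u0BR T M x) (uBR T M x) l hA hB) = 0"
      proof (cases "b' = bstar1 T M x l hA hB")
        case True
        then show ?thesis using lh by (simp add: L1_BR R1_BR bstar1)
      next
        case False
        then show ?thesis by (simp add: yBR_def)
      qed
    qed
  qed
  then show ?thesis using lp1_identity[OF yBR_realY[OF q T, where M=M and x=x] T, where M=M and x=x and uz="u0BR T M x" and u="uBR T M x"] by simp
qed


primrec Dn :: "('k::finite \<Rightarrow> 'l \<Rightarrow> 'a::finite \<Rightarrow> 'b::finite \<Rightarrow> real) \<Rightarrow> ('l \<Rightarrow> 'a list \<Rightarrow> 'b list \<Rightarrow> 'b \<Rightarrow> real)
   \<Rightarrow> nat \<Rightarrow> 'k \<Rightarrow> 'a list \<Rightarrow> 'b list \<Rightarrow> real" where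
  "Dn M y 0 k hA hB = 0"
| "Dn M y (Suc n) k hA hB = Max (range (\<lambda>a'. (\<Sum>l\<in>UNIV. \<Sum>b'\<in>UNIV. M k l a' b' * y l hA hB b')
      + (\<Sum>b'\<in>UNIV. Dn M y n k (hA @ [a']) (hB @ [b']))))"

definition "Dv T M y k hA hB = Dn M y (T - length hA) k hA hB"

definition "E2 T M y k hA hB a' = (\<Sum>l\<in>UNIV. \<Sum>b'\<in>UNIV. M k l a' b' * y l hA hB b')
      + (\<Sum>b'\<in>UNIV. Dv T M y k (hA @ [a']) (hB @ [b']))"

lemma Dv_step: "length hA < T \<Longrightarrow> Dv T M y k hA hB = Max (range (E2 T M y k hA hB))"
proof -
  assume h: "length hA < T"
  then have e: "T - length hA = Suc (T - length hA - 1)" by simp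
  have e2: "T - length (hA @ [a']) = T - length hA - 1" for a' :: 'a by simp
  show ?thesis unfolding Dv_def E2_def by (subst e) (simp only: Dn.simps e2)
qed

lemma Dv_end: "length hA \<ge> T \<Longrightarrow> Dv T M y k hA hB = 0"
  unfolding Dv_def by simp

lemma E2_le: "length hA < T \<Longrightarrow> E2 T M y k hA hB a' \<le> Dv T M y k hA hB"
  by (simp add: Dv_step)

definition "astar2 T M y k hA hB = (SOME a'. E2 T M y k hA hB a' = Dv T M y k hA hB)"

lemma astar2: "length hA < T \<Longrightarrow> E2 T M y k hA hB (astar2 T M y k hA hB) = Dv T M y k hA hB"
proof -
  assume h: "length hA < T"
  have "Max (range (E2 T M y k hA hB)) \<in> range (E2 T M y k hA hB)" by (rule Max_in) auto
  then obtain a' where "Max (range (E2 T M y k hA hB)) = E2 T M y k hA hB a'" by (blast elim: rangeE)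
  then have "\<exists>a'. E2 T M y k hA hB a' = Dv T M y k hA hB" using h by (auto simp: Dv_step)
  then show ?thesis unfolding astar2_def by (rule someI_ex)
qed

definition "wBR T M y = (\<lambda>k hA hB a b. Dv T M y k (hA @ [a]) (hB @ [b]))"
definition "w0BR T M y = (\<lambda>k. Dv T M y k [] [])"

lemma conv0_wBR: "length hA < T \<Longrightarrow> conv0 T (wBR T M y) k hA hB a b = Dv T M y k (hA @ [a]) (hB @ [b])"
  by (auto simp: conv0_def wBR_def Dv_end)

lemma L2_BR: "length hA < T \<Longrightarrow> L2 T M y (wBR T M y) k hA hB a' = E2 T M y k hA hB a'"
  by (simp add: L2_def E2_def conv0_wBR)

lemma R2_BR: "length hA = length hB \<Longrightarrow> length hA < T \<Longrightarrow> R2 T (w0BR T M y) (wBR T M y) k hA hB = Dv T M y k hA hB"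
proof (cases hA rule: rev_cases)
  case Nil
  assume "length hA = length hB" then show ?thesis using Nil by (simp add: R2_def w0BR_def)
next
  case (snoc h a)
  assume l: "length hA = length hB" "length hA < T"
  then obtain h' b where hb: "hB = h' @ [b]" using snoc by (cases hB rule: rev_cases) auto
  show ?thesis using l snoc hb by (simp add: R2_def conv0_wBR)
qed

lemma BR2_feasible:
  assumes Y: "realY T q y" and T: "T \<ge> 1"
  shows "lp2_feasible T q M y (w0BR T M y) (wBR T M y)"
proof -
  have root: "(\<Sum>l\<in>UNIV. \<Sum>b'\<in>UNIV. M k l a' b' * y l [] [] b') + (\<Sum>b'\<in>UNIV. conv0 T (wBR T M y) k [] [] a' b') \<le> w0BR T M y k"
    for k a'
    using E2_le[of "[]" T M y k "[]" a'] L2_BR[of "[]" T M y k "[]" a'] T unfolding L2_def w0BR_def by simp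
  have step: "(\<Sum>l\<in>UNIV. \<Sum>b'\<in>UNIV. M k l a' b' * y l (hA @ [a]) (hB @ [b]) b')
        + (\<Sum>b'\<in>UNIV. conv0 T (wBR T M y) k (hA @ [a]) (hB @ [b]) a' b') \<le> conv0 T (wBR T M y) k hA hB a b"
    if "length hA = length hB \<and> length hA + 1 < T" for k hA hB a b a'
  proof -
    have "length (hA @ [a]) < T" using that by simp
    from E2_le[OF this, of M y k "hB @ [b]" a'] L2_BR[OF this, of M y k "hB @ [b]" a']
    show ?thesis using conv0_wBR[of hA T M y k hB a b] that unfolding L2_def by simp
  qed
  show ?thesis unfolding lp2_feasible_def using Y root step by blast
qed

definition "onpath2 T M y k hA hB = (\<forall>s<length hA. hA ! s = astar2 T M y k (take s hA) (take s hB))"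

lemma onpath2_snoc: "length h = length h' \<Longrightarrow>
   onpath2 T M y k (h @ [a]) (h' @ [b]) = (onpath2 T M y k h h' \<and> a = astar2 T M y k h h')"
  unfolding onpath2_def by (auto simp: nth_append less_Suc_eq)

definition "xBR T p M y k hA hB a = (if length hA = length hB \<and> length hA < T \<and> onpath2 T M y k hA hB
   \<and> a = astar2 T M y k hA hB then p k else 0)"

lemma sum_if_eq2: "(\<Sum>b\<in>(UNIV::'b::finite set). if P \<and> b = c then (v::real) else 0) = (if P then v else 0)"
  by (cases P) (simp_all add: sum.delta)

lemma xBR_realX:
  fixes M :: "'k::finite \<Rightarrow> 'l::finite \<Rightarrow> 'a::finite \<Rightarrow> 'b::finite \<Rightarrow> real"
    and y :: "'l \<Rightarrow> 'a list \<Rightarrow> 'b list \<Rightarrow> 'b \<Rightarrow> real"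
  assumes pp: "\<forall>k. p k > 0" and T: "T \<ge> 1"
  shows "realX T p (xBR T p M y)"
  unfolding realX_def
proof (intro conjI allI impI)
  fix k hA hB a show "0 \<le> xBR T p M y k hA hB a" using pp by (simp add: xBR_def less_imp_le)
next
  fix k show "sum (xBR T p M y k [] []) UNIV = p k"
    using T unfolding xBR_def by (simp add: onpath2_def sum_if_eq2[where P=True, simplified])
next
  fix k and hA :: "'a list" and hB :: "'b list" and a b
  assume h: "length hA = length hB \<and> length hA + 1 < T"
  have "sum (xBR T p M y k (hA @ [a]) (hB @ [b])) UNIV =
     (if onpath2 T M y k (hA @ [a]) (hB @ [b]) then p k else 0)"
    unfolding xBR_def using h by (simp add: sum_if_eq2[of "onpath2 T M y k (hA @ [a]) (hB @ [b])"])
  also have "\<dots> = xBR T p M y k hA hB a" using h by (simp add: onpath2_snoc xBR_def)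
  finally show "sum (xBR T p M y k (hA @ [a]) (hB @ [b])) UNIV = xBR T p M y k hA hB a" .
qed

lemma BR2_value:
  fixes M :: "'k::finite \<Rightarrow> 'l::finite \<Rightarrow> 'a::finite \<Rightarrow> 'b::finite \<Rightarrow> real"
    and y :: "'l \<Rightarrow> 'a list \<Rightarrow> 'b list \<Rightarrow> 'b \<Rightarrow> real"
  assumes pp: "\<forall>k. p k > 0" and T: "T \<ge> 1"
  shows "G T M (xBR T p M y) y = lp2_obj p (w0BR T M y)"
proof -
  have "slack2 T M y (w0BR T M y) (wBR T M y) (xBR T p M y) = 0"
    unfolding slack2_def
  proof (rule sum.neutral, rule ballI)
    fix t assume t: "t \<in> {..<T}"
    show "HS t (\<lambda>hA hB. \<Sum>k\<in>UNIV. \<Sum>a'\<in>UNIV. xBR T p M y k hA hB a' *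
       (R2 T (w0BR T M y) (wBR T M y) k hA hB - L2 T M y (wBR T M y) k hA hB a')) = 0"
      unfolding HS_def
    proof (intro sum.neutral ballI)
      fix hA :: "'a list" and hB :: "'b list" and k a'
      assume "hA \<in> {h. length h = t}" "hB \<in> {h. length h = t}"
      then have lh: "length hA = length hB" "length hA < T" using t by auto
      show "xBR T p M y k hA hB a' * (R2 T (w0BR T M y) (wBR T M y) k hA hB - L2 T M y (wBR T M y) k hA hB a') = 0"
      proof (cases "a' = astar2 T M y k hA hB")
        case True
        then show ?thesis using lh by (simp add: L2_BR R2_BR astar2)
      next
        case False
        then show ?thesis by (simp add: xBR_def)
      qed
    qed
  qed
  then show ?thesis using lp2_identity[OF xBR_realX[OF pp T, where M=M and y=y] T, where M=M and y=y and wz="w0BR T M y" and w="wBR T M y"] by simp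
qed

definition "PX T p = {x. realX T p x \<and> (\<forall>k hA hB a. x k hA hB a \<in> {0, p k}) \<and>
    (\<forall>k hA hB a. \<not> (length hA = length hB \<and> length hA < T) \<longrightarrow> x k hA hB a = 0)}"

definition "PY T q = {y. realY T q y \<and> (\<forall>l hA hB b. y l hA hB b \<in> {0, q l}) \<and>
    (\<forall>l hA hB b. \<not> (length hA = length hB \<and> length hA < T) \<longrightarrow> y l hA hB b = 0)}"

lemma xBR_PX:
  fixes M :: "'k::finite \<Rightarrow> 'l::finite \<Rightarrow> 'a::finite \<Rightarrow> 'b::finite \<Rightarrow> real"
    and y :: "'l \<Rightarrow> 'a list \<Rightarrow> 'b list \<Rightarrow> 'b \<Rightarrow> real"
  shows "\<forall>k. p k > 0 \<Longrightarrow> T \<ge> 1 \<Longrightarrow> xBR T p M y \<in> PX T p"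
  unfolding PX_def using xBR_realX[of p T M y] by (auto simp: xBR_def)

lemma yBR_PY:
  fixes M :: "'k::finite \<Rightarrow> 'l::finite \<Rightarrow> 'a::finite \<Rightarrow> 'b::finite \<Rightarrow> real"
    and x :: "'k \<Rightarrow> 'a list \<Rightarrow> 'b list \<Rightarrow> 'a \<Rightarrow> real"
  shows "\<forall>l. q l > 0 \<Longrightarrow> T \<ge> 1 \<Longrightarrow> yBR T q M x \<in> PY T q"
  unfolding PY_def using yBR_realY[of q T M x] by (auto simp: yBR_def)

lemma finite_lists_lt: "finite {h :: ('x::finite) list. length h < T}"
  using finite_lists_length_le[of "UNIV :: 'x set" T] by (rule finite_subset[rotated]) auto

lemma finite_PX: "finite (PX T (p :: 'k::finite \<Rightarrow> real) :: ('k \<Rightarrow> 'a::finite list \<Rightarrow> 'b::finite list \<Rightarrow> 'a \<Rightarrow> real) set)"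
proof -
  define D where "D = (UNIV :: 'k set) \<times> {h :: 'a list. length h < T} \<times> {h :: 'b list. length h < T} \<times> (UNIV :: 'a set)"
  define V where "V = insert 0 (range p)"
  define r :: "('k \<Rightarrow> 'a list \<Rightarrow> 'b list \<Rightarrow> 'a \<Rightarrow> real) \<Rightarrow> ('k \<times> 'a list \<times> 'b list \<times> 'a \<Rightarrow> real)"
    where "r x = (\<lambda>(k,hA,hB,a). if (k,hA,hB,a) \<in> D then x k hA hB a else 0)" for x
  have fD: "finite D" unfolding D_def by (intro finite_cartesian_product finite_lists_lt finite_UNIV)
  have fV: "finite V" unfolding V_def by simp
  have inj: "inj_on r (PX T p)"
  proof (rule inj_onI)
    fix x x' assume x: "x \<in> PX T p" and x': "x' \<in> PX T p" and e: "r x = r x'"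
    show "x = x'"
    proof (intro ext)
      fix k hA hB a
      show "x k hA hB a = x' k hA hB a"
      proof (cases "(k,hA,hB,a) \<in> D")
        case True
        have "r x (k,hA,hB,a) = r x' (k,hA,hB,a)" using e by simp
        then show ?thesis using True unfolding r_def by simp
      next
        case False
        then have "\<not> (length hA = length hB \<and> length hA < T)" unfolding D_def by auto
        then show ?thesis using x x' unfolding PX_def by auto
      qed
    qed
  qed
  have sub: "r ` PX T p \<subseteq> {f. \<forall>z. (z \<in> D \<longrightarrow> f z \<in> V) \<and> (z \<notin> D \<longrightarrow> f z = 0)}"
    unfolding r_def PX_def V_def by (auto, metis rangeI)
  have "finite {f. \<forall>z. (z \<in> D \<longrightarrow> f z \<in> V) \<and> (z \<notin> D \<longrightarrow> f z = 0)}"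
    using fD fV by (rule finite_set_of_finite_funs)
  then show ?thesis using inj sub inj_on_finite by blast
qed

lemma finite_PY: "finite (PY T (q :: 'l::finite \<Rightarrow> real) :: ('l \<Rightarrow> 'a::finite list \<Rightarrow> 'b::finite list \<Rightarrow> 'b \<Rightarrow> real) set)"
proof -
  define D where "D = (UNIV :: 'l set) \<times> {h :: 'a list. length h < T} \<times> {h :: 'b list. length h < T} \<times> (UNIV :: 'b set)"
  define V where "V = insert 0 (range q)"
  define r :: "('l \<Rightarrow> 'a list \<Rightarrow> 'b list \<Rightarrow> 'b \<Rightarrow> real) \<Rightarrow> ('l \<times> 'a list \<times> 'b list \<times> 'b \<Rightarrow> real)"
    where "r y = (\<lambda>(l,hA,hB,b). if (l,hA,hB,b) \<in> D then y l hA hB b else 0)" for y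
  have fD: "finite D" unfolding D_def by (intro finite_cartesian_product finite_lists_lt finite_UNIV)
  have fV: "finite V" unfolding V_def by simp
  have inj: "inj_on r (PY T q)"
  proof (rule inj_onI)
    fix y y' assume y: "y \<in> PY T q" and y': "y' \<in> PY T q" and e: "r y = r y'"
    show "y = y'"
    proof (intro ext)
      fix l hA hB b
      show "y l hA hB b = y' l hA hB b"
      proof (cases "(l,hA,hB,b) \<in> D")
        case True
        have "r y (l,hA,hB,b) = r y' (l,hA,hB,b)" using e by simp
        then show ?thesis using True unfolding r_def by simp
      next
        case False
        then have "\<not> (length hA = length hB \<and> length hA < T)" unfolding D_def by auto
        then show ?thesis using y y' unfolding PY_def by auto
      qed
    qed
  qed
  have sub: "r ` PY T q \<subseteq> {f. \<forall>z. (z \<in> D \<longrightarrow> f z \<in> V) \<and> (z \<notin> D \<longrightarrow> f z = 0)}"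
    unfolding r_def PY_def V_def by (auto, metis rangeI)
  have "finite {f. \<forall>z. (z \<in> D \<longrightarrow> f z \<in> V) \<and> (z \<notin> D \<longrightarrow> f z = 0)}"
    using fD fV by (rule finite_set_of_finite_funs)
  then show ?thesis using inj sub inj_on_finite by blast
qed

lemma G_mix_x:
  assumes "finite S"
  shows "G T M (\<lambda>k hA hB a. \<Sum>\<pi>\<in>S. lam \<pi> * \<pi> k hA hB a) y = (\<Sum>\<pi>\<in>S. lam \<pi> * G T M \<pi> y)"
proof -
  have "Gst M (\<lambda>k hA hB a. \<Sum>\<pi>\<in>S. lam \<pi> * \<pi> k hA hB a) y = (\<lambda>hA hB. \<Sum>\<pi>\<in>S. lam \<pi> * Gst M \<pi> y hA hB)"
    unfolding Gst_def
    by (intro ext) (simp add: sum_distrib_left sum_distrib_right mult.assoc mult.left_commute sum.swap[of _ S])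
  then show ?thesis unfolding G_def
    by (simp add: HS_sum HS_mult sum_distrib_left sum.swap[of _ S])
qed

lemma G_mix_y:
  assumes "finite S"
  shows "G T M x (\<lambda>l hA hB b. \<Sum>\<rho>\<in>S. mu \<rho> * \<rho> l hA hB b) = (\<Sum>\<rho>\<in>S. mu \<rho> * G T M x \<rho>)"
proof -
  have "Gst M x (\<lambda>l hA hB b. \<Sum>\<rho>\<in>S. mu \<rho> * \<rho> l hA hB b) = (\<lambda>hA hB. \<Sum>\<rho>\<in>S. mu \<rho> * Gst M x \<rho> hA hB)"
    unfolding Gst_def
    by (intro ext) (simp add: sum_distrib_left sum_distrib_right mult.assoc mult.left_commute sum.swap[of _ S])
  then show ?thesis unfolding G_def
    by (simp add: HS_sum HS_mult sum_distrib_left sum.swap[of _ S])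
qed

lemma realX_mix:
  fixes S :: "('k::finite \<Rightarrow> 'a::finite list \<Rightarrow> 'b::finite list \<Rightarrow> 'a \<Rightarrow> real) set"
  assumes fS: "finite S" and X: "\<forall>\<pi>\<in>S. realX T p \<pi>" and l0: "\<forall>\<pi>\<in>S. lam \<pi> \<ge> 0" and l1: "sum lam S = 1"
  shows "realX T p (\<lambda>k hA hB a. \<Sum>\<pi>\<in>S. lam \<pi> * \<pi> k hA hB a)"
  unfolding realX_def
proof (intro conjI allI impI)
  fix k and hA :: "'a list" and hB :: "'b list" and a assume "length hA = length hB \<and> length hA < T"
  then show "0 \<le> (\<Sum>\<pi>\<in>S. lam \<pi> * \<pi> k hA hB a)"
    using X l0 realX_nonneg[of T p _ hA hB] by (intro sum_nonneg mult_nonneg_nonneg) auto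
next
  fix k
  have "(\<Sum>a\<in>UNIV. \<Sum>\<pi>\<in>S. lam \<pi> * \<pi> k [] [] a) = (\<Sum>\<pi>\<in>S. lam \<pi> * (\<Sum>a\<in>UNIV. \<pi> k [] [] a))"
    by (simp add: sum_distrib_left sum.swap[of _ S])
  also have "\<dots> = (\<Sum>\<pi>\<in>S. lam \<pi> * p k)" using X unfolding realX_def by (auto intro!: sum.cong)
  also have "\<dots> = p k" using l1 by (simp add: sum_distrib_right[symmetric])
  finally show "(\<Sum>a\<in>UNIV. \<Sum>\<pi>\<in>S. lam \<pi> * \<pi> k [] [] a) = p k" .
next
  fix k and hA :: "'a list" and hB :: "'b list" and a b assume h: "length hA = length hB \<and> length hA + 1 < T"
  have "(\<Sum>a'\<in>UNIV. \<Sum>\<pi>\<in>S. lam \<pi> * \<pi> k (hA @ [a]) (hB @ [b]) a') = (\<Sum>\<pi>\<in>S. lam \<pi> * (\<Sum>a'\<in>UNIV. \<pi> k (hA @ [a]) (hB @ [b]) a'))"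
    by (simp add: sum_distrib_left sum.swap[of _ S])
  also have "\<dots> = (\<Sum>\<pi>\<in>S. lam \<pi> * \<pi> k hA hB a)" using X h unfolding realX_def by (auto intro!: sum.cong)
  finally show "(\<Sum>a'\<in>UNIV. \<Sum>\<pi>\<in>S. lam \<pi> * \<pi> k (hA @ [a]) (hB @ [b]) a') = (\<Sum>\<pi>\<in>S. lam \<pi> * \<pi> k hA hB a)" .
qed

lemma realY_mix:
  fixes S :: "('l::finite \<Rightarrow> 'a::finite list \<Rightarrow> 'b::finite list \<Rightarrow> 'b \<Rightarrow> real) set"
  assumes fS: "finite S" and Y: "\<forall>\<rho>\<in>S. realY T q \<rho>" and l0: "\<forall>\<rho>\<in>S. mu \<rho> \<ge> 0" and l1: "sum mu S = 1"
  shows "realY T q (\<lambda>l hA hB b. \<Sum>\<rho>\<in>S. mu \<rho> * \<rho> l hA hB b)"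
  unfolding realY_def
proof (intro conjI allI impI)
  fix l and hA :: "'a list" and hB :: "'b list" and b assume "length hA = length hB \<and> length hA < T"
  then show "0 \<le> (\<Sum>\<rho>\<in>S. mu \<rho> * \<rho> l hA hB b)"
    using Y l0 realY_nonneg[of T q _ hA hB] by (intro sum_nonneg mult_nonneg_nonneg) auto
next
  fix l
  have "(\<Sum>b\<in>UNIV. \<Sum>\<rho>\<in>S. mu \<rho> * \<rho> l [] [] b) = (\<Sum>\<rho>\<in>S. mu \<rho> * (\<Sum>b\<in>UNIV. \<rho> l [] [] b))"
    by (simp add: sum_distrib_left sum.swap[of _ S])
  also have "\<dots> = (\<Sum>\<rho>\<in>S. mu \<rho> * q l)" using Y unfolding realY_def by (auto intro!: sum.cong)
  also have "\<dots> = q l" using l1 by (simp add: sum_distrib_right[symmetric])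
  finally show "(\<Sum>b\<in>UNIV. \<Sum>\<rho>\<in>S. mu \<rho> * \<rho> l [] [] b) = q l" .
next
  fix l and hA :: "'a list" and hB :: "'b list" and a b assume h: "length hA = length hB \<and> length hA + 1 < T"
  have "(\<Sum>b'\<in>UNIV. \<Sum>\<rho>\<in>S. mu \<rho> * \<rho> l (hA @ [a]) (hB @ [b]) b') = (\<Sum>\<rho>\<in>S. mu \<rho> * (\<Sum>b'\<in>UNIV. \<rho> l (hA @ [a]) (hB @ [b]) b'))"
    by (simp add: sum_distrib_left sum.swap[of _ S])
  also have "\<dots> = (\<Sum>\<rho>\<in>S. mu \<rho> * \<rho> l hA hB b)" using Y h unfolding realY_def by (auto intro!: sum.cong)
  finally show "(\<Sum>b'\<in>UNIV. \<Sum>\<rho>\<in>S. mu \<rho> * \<rho> l (hA @ [a]) (hB @ [b]) b') = (\<Sum>\<rho>\<in>S. mu \<rho> * \<rho> l hA hB b)" .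
qed




lemma behav1D: "\<sigma> \<in> behav1 T \<Longrightarrow> 1 \<le> t \<Longrightarrow> t \<le> T \<Longrightarrow> length hA = t - 1 \<Longrightarrow> length hB = t - 1 \<Longrightarrow>
   (\<forall>a. 0 \<le> \<sigma> t k hA hB a) \<and> sum (\<sigma> t k hA hB) UNIV = 1"
  unfolding behav1_def is_distr_def by auto

lemma behav2D: "\<tau> \<in> behav2 T \<Longrightarrow> 1 \<le> t \<Longrightarrow> t \<le> T \<Longrightarrow> length hA = t - 1 \<Longrightarrow> length hB = t - 1 \<Longrightarrow>
   (\<forall>b. 0 \<le> \<tau> t l hA hB b) \<and> sum (\<tau> t l hA hB) UNIV = 1"
  unfolding behav2_def is_distr_def by auto


lemma behav1_nonneg: "\<sigma> \<in> behav1 T \<Longrightarrow> length hA = length hB \<Longrightarrow> length hA < T \<Longrightarrow> 0 \<le> \<sigma> (Suc (length hA)) k hA hB a"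
proof -
  assume a: "\<sigma> \<in> behav1 T" "length hA = length hB" "length hA < T"
  have b: "1 \<le> Suc (length hA)" "Suc (length hA) \<le> T" "length hA = Suc (length hA) - 1" "length hB = Suc (length hA) - 1"
    using a by auto
  have "\<forall>c. 0 \<le> \<sigma> (Suc (length hA)) k hA hB c" using behav1D[OF a(1) b, of k] by (rule conjunct1)
  then show ?thesis by blast
qed

lemma behav1_sum: "\<sigma> \<in> behav1 T \<Longrightarrow> length hA = length hB \<Longrightarrow> length hA < T \<Longrightarrow> sum (\<sigma> (Suc (length hA)) k hA hB) UNIV = 1"
proof -
  assume a: "\<sigma> \<in> behav1 T" "length hA = length hB" "length hA < T"
  have b: "1 \<le> Suc (length hA)" "Suc (length hA) \<le> T" "length hA = Suc (length hA) - 1" "length hB = Suc (length hA) - 1"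
    using a by auto
  show ?thesis using behav1D[OF a(1) b, of k] by (rule conjunct2)
qed

lemma behav2_nonneg: "\<tau> \<in> behav2 T \<Longrightarrow> length hA = length hB \<Longrightarrow> length hA < T \<Longrightarrow> 0 \<le> \<tau> (Suc (length hA)) l hA hB b"
proof -
  assume a: "\<tau> \<in> behav2 T" "length hA = length hB" "length hA < T"
  have b: "1 \<le> Suc (length hA)" "Suc (length hA) \<le> T" "length hA = Suc (length hA) - 1" "length hB = Suc (length hA) - 1"
    using a by auto
  have "\<forall>c. 0 \<le> \<tau> (Suc (length hA)) l hA hB c" using behav2D[OF a(1) b, of l] by (rule conjunct1)
  then show ?thesis by blast
qed

lemma behav2_sum: "\<tau> \<in> behav2 T \<Longrightarrow> length hA = length hB \<Longrightarrow> length hA < T \<Longrightarrow> sum (\<tau> (Suc (length hA)) l hA hB) UNIV = 1"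
proof -
  assume a: "\<tau> \<in> behav2 T" "length hA = length hB" "length hA < T"
  have b: "1 \<le> Suc (length hA)" "Suc (length hA) \<le> T" "length hA = Suc (length hA) - 1" "length hB = Suc (length hA) - 1"
    using a by auto
  show ?thesis using behav2D[OF a(1) b, of l] by (rule conjunct2)
qed

definition "PA \<sigma> k hA hB n = (\<Prod>s<n. \<sigma> (Suc s) k (take s hA) (take s hB) (hA ! s))"
definition "PB \<tau> l hA hB n = (\<Prod>s<n. \<tau> (Suc s) l (take s hA) (take s hB) (hB ! s))"

definition "planX p \<sigma> k hA hB a = p k * PA \<sigma> k hA hB (length hA) * \<sigma> (Suc (length hA)) k hA hB a"
definition "planY q \<tau> l hA hB b = q l * PB \<tau> l hA hB (length hA) * \<tau> (Suc (length hA)) l hA hB b"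

lemma PA_snoc: "length hA = n \<Longrightarrow> length hB = n \<Longrightarrow>
   PA \<sigma> k (hA @ [a]) (hB @ [b]) (Suc n) = PA \<sigma> k hA hB n * \<sigma> (Suc n) k hA hB a"
  unfolding PA_def by (auto simp: nth_append intro!: prod.cong)

lemma PB_snoc: "length hA = n \<Longrightarrow> length hB = n \<Longrightarrow>
   PB \<tau> l (hA @ [a]) (hB @ [b]) (Suc n) = PB \<tau> l hA hB n * \<tau> (Suc n) l hA hB b"
  unfolding PB_def by (auto simp: nth_append intro!: prod.cong)

lemma planX_snoc: "length hA = length hB \<Longrightarrow>
   planX p \<sigma> k (hA @ [a']) (hB @ [b']) a = planX p \<sigma> k hA hB a' * \<sigma> (Suc (Suc (length hA))) k (hA @ [a']) (hB @ [b']) a"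
  unfolding planX_def by (simp add: PA_snoc mult.assoc)

lemma planY_snoc: "length hA = length hB \<Longrightarrow>
   planY q \<tau> l (hA @ [a']) (hB @ [b']) b = planY q \<tau> l hA hB b' * \<tau> (Suc (Suc (length hA))) l (hA @ [a']) (hB @ [b']) b"
  unfolding planY_def by (simp add: PB_snoc mult.assoc)

lemma PA_nonneg: "\<sigma> \<in> behav1 T \<Longrightarrow> length hA = length hB \<Longrightarrow> n \<le> length hA \<Longrightarrow> n < T \<Longrightarrow> 0 \<le> PA \<sigma> k hA hB n"
  unfolding PA_def
proof (rule prod_nonneg)
  fix s assume a: "\<sigma> \<in> behav1 T" "length hA = length hB" "n \<le> length hA" "n < T" "s \<in> {..<n}"
  have b: "1 \<le> Suc s" "Suc s \<le> T" "length (take s hA) = Suc s - 1" "length (take s hB) = Suc s - 1"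
    using a by auto
  have "(\<forall>c. 0 \<le> \<sigma> (Suc s) k (take s hA) (take s hB) c)" using behav1D[OF a(1) b, of k] by (rule conjunct1)
  then show "0 \<le> \<sigma> (Suc s) k (take s hA) (take s hB) (hA ! s)" by blast
qed

lemma PB_nonneg: "\<tau> \<in> behav2 T \<Longrightarrow> length hA = length hB \<Longrightarrow> n \<le> length hA \<Longrightarrow> n < T \<Longrightarrow> 0 \<le> PB \<tau> l hA hB n"
  unfolding PB_def
proof (rule prod_nonneg)
  fix s assume a: "\<tau> \<in> behav2 T" "length hA = length hB" "n \<le> length hA" "n < T" "s \<in> {..<n}"
  have b: "1 \<le> Suc s" "Suc s \<le> T" "length (take s hA) = Suc s - 1" "length (take s hB) = Suc s - 1"
    using a by auto
  have "(\<forall>c. 0 \<le> \<tau> (Suc s) l (take s hA) (take s hB) c)" using behav2D[OF a(1) b, of l] by (rule conjunct1)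
  then show "0 \<le> \<tau> (Suc s) l (take s hA) (take s hB) (hB ! s)" by blast
qed

lemma planX_realX:
  fixes \<sigma> :: "nat \<Rightarrow> 'k::finite \<Rightarrow> 'a::finite list \<Rightarrow> 'b::finite list \<Rightarrow> 'a \<Rightarrow> real"
  assumes S: "\<sigma> \<in> behav1 T" and pp: "\<forall>k. p k > 0" and T: "T \<ge> 1"
  shows "realX T p (planX p \<sigma>)"
  unfolding realX_def
proof (intro conjI allI impI)
  fix k and hA :: "'a list" and hB :: "'b list" and a assume h: "length hA = length hB \<and> length hA < T"
  have "0 \<le> \<sigma> (Suc (length hA)) k hA hB a"
    using behav1_nonneg[OF S, of hA hB k a] h by simp
  moreover have "0 \<le> p k" using pp by (simp add: less_imp_le)
  moreover have "0 \<le> PA \<sigma> k hA hB (length hA)" using PA_nonneg[OF S, of hA hB "length hA" k] h by simp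
  ultimately show "0 \<le> planX p \<sigma> k hA hB a"
    unfolding planX_def by (metis mult_nonneg_nonneg)
next
  fix k
  have "sum (\<sigma> 1 k [] []) UNIV = 1" using behav1_sum[OF S, of "[]" "[]" k] T by simp
  moreover have "sum (planX p \<sigma> k [] []) UNIV = p k * sum (\<sigma> 1 k [] []) UNIV"
    unfolding planX_def PA_def by (simp add: sum_distrib_left)
  ultimately show "sum (planX p \<sigma> k [] []) UNIV = p k" by simp
next
  fix k and hA :: "'a list" and hB :: "'b list" and a b
  assume h: "length hA = length hB \<and> length hA + 1 < T"
  have "sum (\<sigma> (Suc (Suc (length hA))) k (hA @ [a]) (hB @ [b])) UNIV = 1"
    using behav1_sum[OF S, of "hA @ [a]" "hB @ [b]" k] h by simp
  moreover have "sum (planX p \<sigma> k (hA @ [a]) (hB @ [b])) UNIV =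
      (\<Sum>c\<in>UNIV. planX p \<sigma> k hA hB a * \<sigma> (Suc (Suc (length hA))) k (hA @ [a]) (hB @ [b]) c)"
    by (rule sum.cong[OF refl]) (use h in \<open>simp add: planX_snoc\<close>)
  moreover have "(\<Sum>c\<in>UNIV. planX p \<sigma> k hA hB a * \<sigma> (Suc (Suc (length hA))) k (hA @ [a]) (hB @ [b]) c)
      = planX p \<sigma> k hA hB a * sum (\<sigma> (Suc (Suc (length hA))) k (hA @ [a]) (hB @ [b])) UNIV"
    by (rule sum_distrib_left[symmetric])
  ultimately show "sum (planX p \<sigma> k (hA @ [a]) (hB @ [b])) UNIV = planX p \<sigma> k hA hB a" by simp
qed

lemma planY_realY:
  fixes \<tau> :: "nat \<Rightarrow> 'l::finite \<Rightarrow> 'a::finite list \<Rightarrow> 'b::finite list \<Rightarrow> 'b \<Rightarrow> real"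
  assumes S: "\<tau> \<in> behav2 T" and qq: "\<forall>l. q l > 0" and T: "T \<ge> 1"
  shows "realY T q (planY q \<tau>)"
  unfolding realY_def
proof (intro conjI allI impI)
  fix l and hA :: "'a list" and hB :: "'b list" and b assume h: "length hA = length hB \<and> length hA < T"
  have "0 \<le> \<tau> (Suc (length hA)) l hA hB b"
    using behav2_nonneg[OF S, of hA hB l b] h by simp
  moreover have "0 \<le> q l" using qq less_imp_le by blast
  moreover have "0 \<le> PB \<tau> l hA hB (length hA)" using PB_nonneg[OF S, of hA hB "length hA" l] h by simp
  ultimately show "0 \<le> planY q \<tau> l hA hB b"
    unfolding planY_def by (metis mult_nonneg_nonneg)
next
  fix l
  have "sum (\<tau> 1 l [] []) UNIV = 1" using behav2_sum[OF S, of "[]" "[]" l] T by simp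
  moreover have "sum (planY q \<tau> l [] []) UNIV = q l * sum (\<tau> 1 l [] []) UNIV"
    unfolding planY_def PB_def by (simp add: sum_distrib_left)
  ultimately show "sum (planY q \<tau> l [] []) UNIV = q l" by simp
next
  fix l and hA :: "'a list" and hB :: "'b list" and a b
  assume h: "length hA = length hB \<and> length hA + 1 < T"
  have "sum (\<tau> (Suc (Suc (length hA))) l (hA @ [a]) (hB @ [b])) UNIV = 1"
    using behav2_sum[OF S, of "hA @ [a]" "hB @ [b]" l] h by simp
  moreover have "sum (planY q \<tau> l (hA @ [a]) (hB @ [b])) UNIV =
      (\<Sum>c\<in>UNIV. planY q \<tau> l hA hB b * \<tau> (Suc (Suc (length hA))) l (hA @ [a]) (hB @ [b]) c)"
    by (rule sum.cong[OF refl]) (use h in \<open>simp add: planY_snoc\<close>)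
  moreover have "(\<Sum>c\<in>UNIV. planY q \<tau> l hA hB b * \<tau> (Suc (Suc (length hA))) l (hA @ [a]) (hB @ [b]) c)
      = planY q \<tau> l hA hB b * sum (\<tau> (Suc (Suc (length hA))) l (hA @ [a]) (hB @ [b])) UNIV"
    by (rule sum_distrib_left[symmetric])
  ultimately show "sum (planY q \<tau> l (hA @ [a]) (hB @ [b])) UNIV = planY q \<tau> l hA hB b" by simp
qed

lemma planX_agree:
  assumes X: "realX T p x" and I: "induced1 T p x \<sigma>" and pp: "\<forall>k. p k > 0"
  shows "length hA = length hB \<Longrightarrow> length hA < T \<Longrightarrow> planX p \<sigma> k hA hB a = x k hA hB a"
proof (induction "length hA" arbitrary: hA hB a)
  case 0
  then have "hA = []" "hB = []" by auto
  moreover have "\<sigma> 1 k [] [] a = x k [] [] a / p k" using I unfolding induced1_def by blast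
  ultimately show ?case using pp unfolding planX_def PA_def by (simp add: less_imp_neq[symmetric])
next
  case (Suc n)
  obtain h a' where ha: "hA = h @ [a']" using Suc.hyps(2) by (cases hA rule: rev_cases) auto
  obtain h' b' where hb: "hB = h' @ [b']" using Suc.hyps(2) Suc.prems(1) by (cases hB rule: rev_cases) auto
  have lh: "length h = n" "length h' = n" using ha hb Suc.hyps(2) Suc.prems(1) by auto
  have IH: "planX p \<sigma> k h h' a' = x k h h' a'" using Suc.hyps(1)[of h h' a'] lh Suc.prems(2) ha by simp
  have e: "planX p \<sigma> k hA hB a = x k h h' a' * \<sigma> (length h + 2) k (h @ [a']) (h' @ [b']) a"
    unfolding ha hb using lh by (simp add: planX_snoc IH)
  show ?case
  proof (cases "x k h h' a' = 0")
    case False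
    have "\<sigma> (length h + 2) k (h @ [a']) (h' @ [b']) a = x k (h @ [a']) (h' @ [b']) a / x k h h' a'"
      using I[unfolded induced1_def, THEN conjunct2, rule_format, where k=k and hA=h and hB=h' and a'=a' and b'=b' and a=a]
        False lh Suc.prems(2) ha by simp
    then show ?thesis using e False ha hb by simp
  next
    case True
    have s: "sum (x k (h @ [a']) (h' @ [b'])) UNIV = 0"
      using X True lh Suc.prems(2) ha unfolding realX_def by auto
    have "\<forall>c\<in>UNIV. 0 \<le> x k (h @ [a']) (h' @ [b']) c"
      using realX_nonneg[OF X] lh Suc.prems(2) ha by auto
    then have "x k (h @ [a']) (h' @ [b']) a = 0"
      using s sum_nonneg_eq_0_iff[OF finite_UNIV, of "x k (h @ [a']) (h' @ [b'])"] by auto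
    then show ?thesis using e True ha hb by simp
  qed
qed

lemma planY_agree:
  assumes Y: "realY T q y" and I: "induced2 T q y \<tau>" and qq: "\<forall>l. q l > 0"
  shows "length hA = length hB \<Longrightarrow> length hA < T \<Longrightarrow> planY q \<tau> l hA hB b = y l hA hB b"
proof (induction "length hA" arbitrary: hA hB b)
  case 0
  then have "hA = []" "hB = []" by auto
  moreover have "\<tau> 1 l [] [] b = y l [] [] b / q l" using I unfolding induced2_def by blast
  ultimately show ?case using qq unfolding planY_def PB_def by (simp add: less_imp_neq[symmetric])
next
  case (Suc n)
  obtain h a' where ha: "hA = h @ [a']" using Suc.hyps(2) by (cases hA rule: rev_cases) auto
  obtain h' b' where hb: "hB = h' @ [b']" using Suc.hyps(2) Suc.prems(1) by (cases hB rule: rev_cases) auto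
  have lh: "length h = n" "length h' = n" using ha hb Suc.hyps(2) Suc.prems(1) by auto
  have IH: "planY q \<tau> l h h' b' = y l h h' b'" using Suc.hyps(1)[of h h' b'] lh Suc.prems(2) ha by simp
  have e: "planY q \<tau> l hA hB b = y l h h' b' * \<tau> (length h + 2) l (h @ [a']) (h' @ [b']) b"
    unfolding ha hb using lh by (simp add: planY_snoc IH)
  show ?case
  proof (cases "y l h h' b' = 0")
    case False
    have "\<tau> (length h + 2) l (h @ [a']) (h' @ [b']) b = y l (h @ [a']) (h' @ [b']) b / y l h h' b'"
      using I[unfolded induced2_def, THEN conjunct2, rule_format, where l=l and hA=h and hB=h' and a'=a' and b'=b' and b=b]
        False lh Suc.prems(2) ha by simp
    then show ?thesis using e False ha hb by simp
  next
    case True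
    have s: "sum (y l (h @ [a']) (h' @ [b'])) UNIV = 0"
      using Y True lh Suc.prems(2) ha unfolding realY_def by auto
    have "\<forall>c\<in>UNIV. 0 \<le> y l (h @ [a']) (h' @ [b']) c"
      using realY_nonneg[OF Y] lh Suc.prems(2) ha by auto
    then have "y l (h @ [a']) (h' @ [b']) b = 0"
      using s sum_nonneg_eq_0_iff[OF finite_UNIV, of "y l (h @ [a']) (h' @ [b'])"] by auto
    then show ?thesis using e True ha hb by simp
  qed
qed

lemma G_cong_x: "(\<And>k hA hB a. length hA = length hB \<Longrightarrow> length hA < T \<Longrightarrow> x k hA hB a = x' k hA hB a)
   \<Longrightarrow> G T M x y = G T M x' y"
  unfolding G_def
  apply (rule sum.cong[OF refl])
  apply (rule HS_cong)
  unfolding Gst_def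
  apply (intro sum.cong refl)
  apply simp
  done

lemma G_cong_y: "(\<And>l hA hB b. length hA = length hB \<Longrightarrow> length hA < T \<Longrightarrow> y l hA hB b = y' l hA hB b)
   \<Longrightarrow> G T M x y = G T M x y'"
  unfolding G_def
  apply (rule sum.cong[OF refl])
  apply (rule HS_cong)
  unfolding Gst_def
  apply (intro sum.cong refl)
  apply simp
  done




definition mkS1 :: "nat \<Rightarrow> ('k \<Rightarrow> real) \<Rightarrow> ('k \<Rightarrow> 'a::finite list \<Rightarrow> 'b list \<Rightarrow> 'a \<Rightarrow> real) \<Rightarrow> nat \<Rightarrow> 'k \<Rightarrow> 'a list \<Rightarrow> 'b list \<Rightarrow> 'a \<Rightarrow> real" where
  "mkS1 T p x t k hA hB a = (if t = 1 then x k [] [] a / p k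
   else if hA \<noteq> [] \<and> x k (butlast hA) (butlast hB) (last hA) \<noteq> 0
     then x k hA hB a / x k (butlast hA) (butlast hB) (last hA)
   else 1 / real (card (UNIV :: 'a set)))"

definition mkS2 :: "nat \<Rightarrow> ('l \<Rightarrow> real) \<Rightarrow> ('l \<Rightarrow> 'a list \<Rightarrow> 'b::finite list \<Rightarrow> 'b \<Rightarrow> real) \<Rightarrow> nat \<Rightarrow> 'l \<Rightarrow> 'a list \<Rightarrow> 'b list \<Rightarrow> 'b \<Rightarrow> real" where
  "mkS2 T q y t l hA hB b = (if t = 1 then y l [] [] b / q l
   else if hB \<noteq> [] \<and> y l (butlast hA) (butlast hB) (last hB) \<noteq> 0
     then y l hA hB b / y l (butlast hA) (butlast hB) (last hB)
   else 1 / real (card (UNIV :: 'b set)))"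

lemma uniform_distr: "is_distr (\<lambda>a::'a::finite. 1 / real (card (UNIV :: 'a set)))"
  unfolding is_distr_def by simp

lemma mkS1_behav:
  fixes x :: "'k::finite \<Rightarrow> 'a::finite list \<Rightarrow> 'b::finite list \<Rightarrow> 'a \<Rightarrow> real"
  assumes X: "realX T p x" and pp: "\<forall>k. p k > 0"
  shows "mkS1 T p x \<in> behav1 T"
  unfolding behav1_def
proof (intro CollectI ballI allI impI)
  fix t k and hA :: "'a list" and hB :: "'b list"
  assume t: "t \<in> {1..T}" and l: "length hA = t - 1 \<and> length hB = t - 1"
  show "is_distr (mkS1 T p x t k hA hB)"
  proof (cases "t = 1")
    case True
    have nn: "0 \<le> x k [] [] a" for a using realX_nonneg[OF X, of "[]" "[]" k a] t by simp
    have "sum (x k [] []) UNIV = p k" using X unfolding realX_def by blast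
    then have "(\<Sum>a\<in>UNIV. x k [] [] a / p k) = 1" using pp by (simp add: sum_divide_distrib[symmetric] less_imp_neq[symmetric])
    then show ?thesis unfolding is_distr_def mkS1_def using True nn pp by (simp add: less_imp_le)
  next
    case False
    then have "t \<ge> 2" using t by auto
    then obtain h a' where ha: "hA = h @ [a']" using l by (cases hA rule: rev_cases) auto
    obtain h' b' where hb: "hB = h' @ [b']" using l \<open>t \<ge> 2\<close> by (cases hB rule: rev_cases) auto
    have lh: "length h = length h'" "length h + 1 < T" "length hA < T" using l ha hb t \<open>t \<ge> 2\<close> by auto
    show ?thesis
    proof (cases "x k h h' a' = 0")
      case True
      then show ?thesis unfolding mkS1_def using False ha hb uniform_distr by simp
    next
      case nz: False
      have pos: "x k h h' a' > 0" using realX_nonneg[OF X, of h h' k a'] lh nz by simp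
      have s: "sum (x k hA hB) UNIV = x k h h' a'"
        using X lh unfolding realX_def ha hb by blast
      have nn: "0 \<le> x k hA hB a" for a using realX_nonneg[OF X, of hA hB k a] lh l by simp
      have "(\<Sum>a\<in>UNIV. x k hA hB a / x k h h' a') = 1" using s pos by (simp add: sum_divide_distrib[symmetric])
      then show ?thesis unfolding is_distr_def mkS1_def using False ha hb nz nn pos by simp
    qed
  qed
qed

lemma mkS2_behav:
  fixes y :: "'l::finite \<Rightarrow> 'a::finite list \<Rightarrow> 'b::finite list \<Rightarrow> 'b \<Rightarrow> real"
  assumes Y: "realY T q y" and qq: "\<forall>l. q l > 0"
  shows "mkS2 T q y \<in> behav2 T"
  unfolding behav2_def
proof (intro CollectI ballI allI impI)
  fix t l and hA :: "'a list" and hB :: "'b list"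
  assume t: "t \<in> {1..T}" and len: "length hA = t - 1 \<and> length hB = t - 1"
  show "is_distr (mkS2 T q y t l hA hB)"
  proof (cases "t = 1")
    case True
    have nn: "0 \<le> y l [] [] b" for b using realY_nonneg[OF Y, of "[]" "[]" l b] t by simp
    have "sum (y l [] []) UNIV = q l" using Y unfolding realY_def by blast
    then have "(\<Sum>b\<in>UNIV. y l [] [] b / q l) = 1" using qq by (simp add: sum_divide_distrib[symmetric] less_imp_neq[symmetric])
    then show ?thesis unfolding is_distr_def mkS2_def using True nn qq by (simp add: less_imp_le)
  next
    case False
    then have "t \<ge> 2" using t by auto
    then obtain h a' where ha: "hA = h @ [a']" using len by (cases hA rule: rev_cases) auto
    obtain h' b' where hb: "hB = h' @ [b']" using len \<open>t \<ge> 2\<close> by (cases hB rule: rev_cases) auto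
    have lh: "length h = length h'" "length h + 1 < T" "length hA < T" using len ha hb t \<open>t \<ge> 2\<close> by auto
    show ?thesis
    proof (cases "y l h h' b' = 0")
      case True
      then show ?thesis unfolding mkS2_def using False ha hb uniform_distr by simp
    next
      case nz: False
      have pos: "y l h h' b' > 0" using realY_nonneg[OF Y, of h h' l b'] lh nz by simp
      have s: "sum (y l hA hB) UNIV = y l h h' b'"
        using Y lh unfolding realY_def ha hb by blast
      have nn: "0 \<le> y l hA hB b" for b using realY_nonneg[OF Y, of hA hB l b] lh len by simp
      have "(\<Sum>b\<in>UNIV. y l hA hB b / y l h h' b') = 1" using s pos by (simp add: sum_divide_distrib[symmetric])
      then show ?thesis unfolding is_distr_def mkS2_def using False ha hb nz nn pos by simp
    qed
  qed
qed

lemma mkS1_induced: "induced1 T p x (mkS1 T p x)"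
  unfolding induced1_def mkS1_def by simp

lemma mkS2_induced: "induced2 T q y (mkS2 T q y)"
  unfolding induced2_def mkS2_def by simp


lemma marg:
  fixes \<sigma> :: "nat \<Rightarrow> 'k::finite \<Rightarrow> 'a::finite list \<Rightarrow> 'b::finite list \<Rightarrow> 'a \<Rightarrow> real"
    and \<tau> :: "nat \<Rightarrow> 'l::finite \<Rightarrow> 'a list \<Rightarrow> 'b list \<Rightarrow> 'b \<Rightarrow> real"
  assumes S: "\<sigma> \<in> behav1 T" and U: "\<tau> \<in> behav2 T"
  shows "t + n \<le> T \<Longrightarrow> HS (t + n) (\<lambda>hA hB. PA \<sigma> k hA hB (t + n) * PB \<tau> l hA hB (t + n) * f (take t hA) (take t hB))
      = HS t (\<lambda>hA hB. PA \<sigma> k hA hB t * PB \<tau> l hA hB t * f hA hB)"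
proof (induction n)
  case 0
  show ?case by (simp only: add_0_right, rule HS_cong, simp)
next
  case (Suc n)
  let ?m = "t + n"
  have "HS (t + Suc n) (\<lambda>hA hB. PA \<sigma> k hA hB (t + Suc n) * PB \<tau> l hA hB (t + Suc n) * f (take t hA) (take t hB))
     = HS ?m (\<lambda>h h'. \<Sum>a\<in>UNIV. \<Sum>b\<in>UNIV. PA \<sigma> k (h @ [a]) (h' @ [b]) (Suc ?m) * PB \<tau> l (h @ [a]) (h' @ [b]) (Suc ?m)
         * f (take t (h @ [a])) (take t (h' @ [b])))"
    by (simp add: HS_Suc)
  also have "\<dots> = HS ?m (\<lambda>hA hB. PA \<sigma> k hA hB ?m * PB \<tau> l hA hB ?m * f (take t hA) (take t hB))"
  proof (rule HS_cong)
    fix h :: "'a list" and h' :: "'b list" assume lh: "length h = ?m" "length h' = ?m"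
    have s1: "sum (\<sigma> (Suc ?m) k h h') UNIV = 1" using behav1_sum[OF S, of h h' k] lh Suc.prems by simp
    have s2: "sum (\<tau> (Suc ?m) l h h') UNIV = 1" using behav2_sum[OF U, of h h' l] lh Suc.prems by simp
    have "(\<Sum>a\<in>UNIV. \<Sum>b\<in>UNIV. PA \<sigma> k (h @ [a]) (h' @ [b]) (Suc ?m) * PB \<tau> l (h @ [a]) (h' @ [b]) (Suc ?m)
         * f (take t (h @ [a])) (take t (h' @ [b])))
      = (\<Sum>a\<in>UNIV. \<Sum>b\<in>UNIV. (PA \<sigma> k h h' ?m * PB \<tau> l h h' ?m * f (take t h) (take t h')) *
           (\<sigma> (Suc ?m) k h h' a * \<tau> (Suc ?m) l h h' b))"
      using lh by (intro sum.cong refl) (simp add: PA_snoc PB_snoc)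
    also have "\<dots> = (\<Sum>a\<in>UNIV. (PA \<sigma> k h h' ?m * PB \<tau> l h h' ?m * f (take t h) (take t h') * \<sigma> (Suc ?m) k h h' a)
          * sum (\<tau> (Suc ?m) l h h') UNIV)"
      by (rule sum.cong[OF refl]) (simp add: sum_distrib_left mult.assoc)
    also have "\<dots> = (\<Sum>a\<in>UNIV. (PA \<sigma> k h h' ?m * PB \<tau> l h h' ?m * f (take t h) (take t h')) * \<sigma> (Suc ?m) k h h' a)"
      using s2 by simp
    also have "\<dots> = (PA \<sigma> k h h' ?m * PB \<tau> l h h' ?m * f (take t h) (take t h')) * sum (\<sigma> (Suc ?m) k h h') UNIV"
      by (simp add: sum_distrib_left)
    finally show "(\<Sum>a\<in>UNIV. \<Sum>b\<in>UNIV. PA \<sigma> k (h @ [a]) (h' @ [b]) (Suc ?m) * PB \<tau> l (h @ [a]) (h' @ [b]) (Suc ?m)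
         * f (take t (h @ [a])) (take t (h' @ [b]))) = PA \<sigma> k h h' ?m * PB \<tau> l h h' ?m * f (take t h) (take t h')"
      using s1 by simp
  qed
  also have "\<dots> = HS t (\<lambda>hA hB. PA \<sigma> k hA hB t * PB \<tau> l hA hB t * f hA hB)"
    using Suc by simp
  finally show ?case .
qed

lemma gamma_kl:
  fixes \<sigma> :: "nat \<Rightarrow> 'k::finite \<Rightarrow> 'a::finite list \<Rightarrow> 'b::finite list \<Rightarrow> 'a \<Rightarrow> real"
    and \<tau> :: "nat \<Rightarrow> 'l::finite \<Rightarrow> 'a list \<Rightarrow> 'b list \<Rightarrow> 'b \<Rightarrow> real"
  assumes S: "\<sigma> \<in> behav1 T" and U: "\<tau> \<in> behav2 T"
  shows "HS T (\<lambda>hA hB. PA \<sigma> k hA hB T * PB \<tau> l hA hB T * (\<Sum>s<T. M k l (hA ! s) (hB ! s)))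
    = (\<Sum>s<T. HS s (\<lambda>h h'. \<Sum>a\<in>UNIV. \<Sum>b\<in>UNIV. PA \<sigma> k h h' s * \<sigma> (Suc s) k h h' a *
          (PB \<tau> l h h' s * \<tau> (Suc s) l h h' b) * M k l a b))"
proof -
  have "HS T (\<lambda>hA hB. PA \<sigma> k hA hB T * PB \<tau> l hA hB T * (\<Sum>s<T. M k l (hA ! s) (hB ! s)))
      = (\<Sum>s<T. HS T (\<lambda>hA hB. PA \<sigma> k hA hB T * PB \<tau> l hA hB T * M k l (hA ! s) (hB ! s)))"
    by (simp add: sum_distrib_left HS_sum)
  also have "\<dots> = (\<Sum>s<T. HS s (\<lambda>h h'. \<Sum>a\<in>UNIV. \<Sum>b\<in>UNIV. PA \<sigma> k h h' s * \<sigma> (Suc s) k h h' a *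
          (PB \<tau> l h h' s * \<tau> (Suc s) l h h' b) * M k l a b))"
  proof (rule sum.cong[OF refl])
    fix s assume s: "s \<in> {..<T}"
    have eT: "T = Suc s + (T - Suc s)" using s by simp
    have "HS T (\<lambda>hA hB. PA \<sigma> k hA hB T * PB \<tau> l hA hB T * M k l (hA ! s) (hB ! s))
       = HS (Suc s + (T - Suc s)) (\<lambda>hA hB. PA \<sigma> k hA hB (Suc s + (T - Suc s)) * PB \<tau> l hA hB (Suc s + (T - Suc s)) *
            (\<lambda>h h'. M k l (h ! s) (h' ! s)) (take (Suc s) hA) (take (Suc s) hB))"
      by (subst eT[symmetric], rule HS_cong) (use s in simp)
    also have "\<dots> = HS (Suc s) (\<lambda>hA hB. PA \<sigma> k hA hB (Suc s) * PB \<tau> l hA hB (Suc s) * M k l (hA ! s) (hB ! s))"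
      by (rule marg[OF S U]) (use s in simp)
    also have "\<dots> = HS s (\<lambda>h h'. \<Sum>a\<in>UNIV. \<Sum>b\<in>UNIV. PA \<sigma> k h h' s * \<sigma> (Suc s) k h h' a *
          (PB \<tau> l h h' s * \<tau> (Suc s) l h h' b) * M k l a b)"
      unfolding HS_Suc by (rule HS_cong) (simp add: PA_snoc PB_snoc nth_append)
    finally show "HS T (\<lambda>hA hB. PA \<sigma> k hA hB T * PB \<tau> l hA hB T * M k l (hA ! s) (hB ! s)) = HS s (\<lambda>h h'. \<Sum>a\<in>UNIV. \<Sum>b\<in>UNIV. PA \<sigma> k h h' s * \<sigma> (Suc s) k h h' a *
          (PB \<tau> l h h' s * \<tau> (Suc s) l h h' b) * M k l a b)" .
  qed
  finally show ?thesis .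
qed

lemma gamma_G:
  fixes \<sigma> :: "nat \<Rightarrow> 'k::finite \<Rightarrow> 'a::finite list \<Rightarrow> 'b::finite list \<Rightarrow> 'a \<Rightarrow> real"
    and \<tau> :: "nat \<Rightarrow> 'l::finite \<Rightarrow> 'a list \<Rightarrow> 'b list \<Rightarrow> 'b \<Rightarrow> real"
  assumes S: "\<sigma> \<in> behav1 T" and U: "\<tau> \<in> behav2 T"
  shows "gamma T p q M \<sigma> \<tau> = G T M (planX p \<sigma>) (planY q \<tau>)"
proof -
  define X where "X k l s h h' = (\<Sum>a\<in>UNIV. \<Sum>b\<in>UNIV. PA \<sigma> k h h' s * \<sigma> (Suc s) k h h' a *
          (PB \<tau> l h h' s * \<tau> (Suc s) l h h' b) * M k l a b)" for k l s h h'
  have "gamma T p q M \<sigma> \<tau> = (\<Sum>k\<in>UNIV. \<Sum>l\<in>UNIV. p k * q l *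
      HS T (\<lambda>hA hB. PA \<sigma> k hA hB T * PB \<tau> l hA hB T * (\<Sum>s<T. M k l (hA ! s) (hB ! s))))"
    unfolding gamma_def HS_def PA_def PB_def
    by (simp add: sum_distrib_left prod.distrib mult.assoc)
  also have "\<dots> = (\<Sum>k\<in>UNIV. \<Sum>l\<in>UNIV. p k * q l * (\<Sum>s<T. HS s (X k l s)))"
    unfolding X_def by (simp add: gamma_kl[OF S U])
  also have "\<dots> = (\<Sum>s<T. \<Sum>k\<in>UNIV. \<Sum>l\<in>UNIV. HS s (\<lambda>h h'. p k * q l * X k l s h h'))"
    by (simp add: HS_mult sum_distrib_left sum.swap[of _ "{..<T}"])
  also have "\<dots> = (\<Sum>s<T. HS s (\<lambda>h h'. \<Sum>k\<in>UNIV. \<Sum>l\<in>UNIV. p k * q l * X k l s h h'))"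
    by (simp add: HS_sum)
  also have "\<dots> = G T M (planX p \<sigma>) (planY q \<tau>)"
    unfolding G_def
  proof (rule sum.cong[OF refl], rule HS_cong)
    fix s and h :: "'a list" and h' :: "'b list" assume "length h = s" "length h' = s"
    then show "(\<Sum>k\<in>UNIV. \<Sum>l\<in>UNIV. p k * q l * X k l s h h') = Gst M (planX p \<sigma>) (planY q \<tau>) h h'"
      unfolding Gst_def X_def planX_def planY_def
      by (simp add: sum_distrib_left mult.assoc mult.left_commute mult.commute)
  qed
  finally show ?thesis .
qed




theorem theorem1:
  fixes T :: nat
    and p :: "'k::finite \<Rightarrow> real" and q :: "'l::finite \<Rightarrow> real"
    and M :: "'k \<Rightarrow> 'l \<Rightarrow> 'a::finite \<Rightarrow> 'b::finite \<Rightarrow> real"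
  assumes "T \<ge> 1"
    and "\<forall>k. p k > 0" and "sum p UNIV = 1"
    and "\<forall>l. q l > 0" and "sum q UNIV = 1"
  shows
   "(\<exists>x u0 u. lp1_feasible T p M x u0 u \<and> lp1_obj q u0 = val_maxmin T p q M) \<and>
    (\<forall>x u0 u. lp1_feasible T p M x u0 u \<longrightarrow> lp1_obj q u0 \<le> val_maxmin T p q M) \<and>
    (\<forall>x u0 u. lp1_feasible T p M x u0 u \<and>
        (\<forall>x' u0' u'. lp1_feasible T p M x' u0' u' \<longrightarrow> lp1_obj q u0' \<le> lp1_obj q u0) \<longrightarrow>
        (\<forall>\<sigma>\<in>behav1 T. induced1 T p x \<sigma> \<longrightarrow> security1 T p q M \<sigma>)) \<and>
    (\<exists>y w0 w. lp2_feasible T q M y w0 w \<and> lp2_obj p w0 = val_maxmin T p q M) \<and>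
    (\<forall>y w0 w. lp2_feasible T q M y w0 w \<longrightarrow> lp2_obj p w0 \<ge> val_maxmin T p q M) \<and>
    (\<forall>y w0 w. lp2_feasible T q M y w0 w \<and>
        (\<forall>y' w0' w'. lp2_feasible T q M y' w0' w' \<longrightarrow> lp2_obj p w0 \<le> lp2_obj p w0') \<longrightarrow>
        (\<forall>\<tau>\<in>behav2 T. induced2 T q y \<tau> \<longrightarrow> security2 T p q M \<tau>))"
proof -
  note T1 = assms(1) and pp = assms(2) and qq = assms(4)
  define PXs :: "('k \<Rightarrow> 'a list \<Rightarrow> 'b list \<Rightarrow> 'a \<Rightarrow> real) set" where "PXs = PX T p"
  define PYs :: "('l \<Rightarrow> 'a list \<Rightarrow> 'b list \<Rightarrow> 'b \<Rightarrow> real) set" where "PYs = PY T q"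
  have fPX: "finite PXs" unfolding PXs_def by (rule finite_PX)
  have fPY: "finite PYs" unfolding PYs_def by (rule finite_PY)
  have nPX: "PXs \<noteq> {}" using xBR_PX[OF pp T1, of M "\<lambda>_ _ _ _. 0"] unfolding PXs_def by blast
  have nPY: "PYs \<noteq> {}" using yBR_PY[OF qq T1, of M "\<lambda>_ _ _ _. 0"] unfolding PYs_def by blast
  have PXr: "\<forall>\<pi>\<in>PXs. realX T p \<pi>" unfolding PXs_def PX_def by blast
  have PYr: "\<forall>\<rho>\<in>PYs. realY T q \<rho>" unfolding PYs_def PY_def by blast
  obtain lam mu v where mm: "\<forall>\<pi>\<in>PXs. 0 \<le> lam \<pi>" "sum lam PXs = 1" "\<forall>\<rho>\<in>PYs. 0 \<le> mu \<rho>" "sum mu PYs = 1"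
     "\<forall>\<rho>\<in>PYs. v \<le> (\<Sum>\<pi>\<in>PXs. lam \<pi> * G T M \<pi> \<rho>)" "\<forall>\<pi>\<in>PXs. (\<Sum>\<rho>\<in>PYs. G T M \<pi> \<rho> * mu \<rho>) \<le> v"
    using minimax_matrix[OF fPX nPX fPY nPY, of "G T M"] by blast
  define xs where "xs = (\<lambda>k hA hB a. \<Sum>\<pi>\<in>PXs. lam \<pi> * \<pi> k hA hB a)"
  define ys where "ys = (\<lambda>l hA hB b. \<Sum>\<rho>\<in>PYs. mu \<rho> * \<rho> l hA hB b)"
  have Xs: "realX T p xs" unfolding xs_def by (rule realX_mix[OF fPX PXr mm(1,2)])
  have Ys: "realY T q ys" unfolding ys_def by (rule realY_mix[OF fPY PYr mm(3,4)])
  have mixX: "G T M xs \<rho> \<ge> v" if "\<rho> \<in> PYs" for \<rho>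
    using mm(5) that G_mix_x[OF fPX, of T M lam \<rho>] unfolding xs_def by simp
  have mixY: "G T M \<pi> ys \<le> v" if "\<pi> \<in> PXs" for \<pi>
    using mm(6) that G_mix_y[OF fPY, of T M \<pi> mu] unfolding ys_def by (simp add: mult.commute)
  define u0s where "u0s = u0BR T M xs"
  define us where "us = uBR T M xs"
  have F1: "lp1_feasible T p M xs u0s us" unfolding u0s_def us_def by (rule BR1_feasible[OF Xs T1])
  have V1: "lp1_obj q u0s \<ge> v"
  proof -
    have yb: "yBR T q M xs \<in> PYs" unfolding PYs_def by (rule yBR_PY[OF qq T1])
    show ?thesis using mixX[OF yb] BR1_value[OF qq T1, of M xs] unfolding u0s_def by simp
  qed
  define w0s where "w0s = w0BR T M ys"
  define ws where "ws = wBR T M ys"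
  have F2: "lp2_feasible T q M ys w0s ws" unfolding w0s_def ws_def by (rule BR2_feasible[OF Ys T1])
  have V2: "lp2_obj p w0s \<le> v"
  proof -
    have xb: "xBR T p M ys \<in> PXs" unfolding PXs_def by (rule xBR_PX[OF pp T1])
    show ?thesis using mixY[OF xb] BR2_value[OF pp T1, of M ys] unfolding w0s_def by simp
  qed
  have K1: "v \<le> G T M xs y" if "realY T q y" for y
    using weak1[OF F1 that T1] V1 by simp
  have K2: "G T M x ys \<le> v" if "realX T p x" for x
    using weak2[OF F2 that T1] V2 by simp
  have obj1: "lp1_obj q u0s = v" using weak1[OF F1 Ys T1] K2[OF Xs] V1 by simp
  have obj2: "lp2_obj p w0s = v" using weak2[OF F2 Xs T1] K1[OF Ys] V2 by simp
  define ss where "ss = mkS1 T p xs"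
  define ts where "ts = mkS2 T q ys"
  have ssB: "ss \<in> behav1 T" unfolding ss_def by (rule mkS1_behav[OF Xs pp])
  have tsB: "ts \<in> behav2 T" unfolding ts_def by (rule mkS2_behav[OF Ys qq])
  have agreeX: "G T M (planX p \<sigma>) y = G T M x y" if "realX T p x" "induced1 T p x \<sigma>" for x \<sigma> y
    by (rule G_cong_x) (rule planX_agree[OF that pp])
  have agreeY: "G T M x (planY q \<tau>) = G T M x y" if "realY T q y" "induced2 T q y \<tau>" for y \<tau> x
    by (rule G_cong_y) (rule planY_agree[OF that qq])
  have gss: "gamma T p q M ss \<tau> = G T M xs (planY q \<tau>)" if "\<tau> \<in> behav2 T" for \<tau> :: "nat \<Rightarrow> 'l \<Rightarrow> 'a list \<Rightarrow> 'b list \<Rightarrow> 'b \<Rightarrow> real"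
    using gamma_G[OF ssB that] agreeX[OF Xs mkS1_induced] unfolding ss_def by simp
  have gts: "gamma T p q M \<sigma> ts = G T M (planX p \<sigma>) ys" if "\<sigma> \<in> behav1 T" for \<sigma> :: "nat \<Rightarrow> 'k \<Rightarrow> 'a list \<Rightarrow> 'b list \<Rightarrow> 'a \<Rightarrow> real"
    using gamma_G[OF that tsB] agreeY[OF Ys mkS2_induced] unfolding ts_def by simp
  have bddB: "bdd_below ((\<lambda>\<tau>. gamma T p q M \<sigma> \<tau>) ` behav2 T)" if "\<sigma> \<in> behav1 T" for \<sigma> :: "nat \<Rightarrow> 'k \<Rightarrow> 'a list \<Rightarrow> 'b list \<Rightarrow> 'a \<Rightarrow> real"
  proof (rule bdd_belowI2)
    fix \<tau> :: "nat \<Rightarrow> 'l \<Rightarrow> 'a list \<Rightarrow> 'b list \<Rightarrow> 'b \<Rightarrow> real" assume "\<tau> \<in> behav2 T"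
    then show "lp1_obj q (u0BR T M (planX p \<sigma>)) \<le> gamma T p q M \<sigma> \<tau>"
      using gamma_G[OF that \<open>\<tau> \<in> behav2 T\<close>] weak1[OF BR1_feasible[OF planX_realX[OF that pp T1] T1] planY_realY[OF \<open>\<tau> \<in> behav2 T\<close> qq T1] T1]
      by simp
  qed
  have bddA: "bdd_above ((\<lambda>\<sigma>. gamma T p q M \<sigma> \<tau>) ` behav1 T)" if "\<tau> \<in> behav2 T" for \<tau> :: "nat \<Rightarrow> 'l \<Rightarrow> 'a list \<Rightarrow> 'b list \<Rightarrow> 'b \<Rightarrow> real"
  proof (rule bdd_aboveI2)
    fix \<sigma> :: "nat \<Rightarrow> 'k \<Rightarrow> 'a list \<Rightarrow> 'b list \<Rightarrow> 'a \<Rightarrow> real" assume "\<sigma> \<in> behav1 T"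
    then show "gamma T p q M \<sigma> \<tau> \<le> lp2_obj p (w0BR T M (planY q \<tau>))"
      using gamma_G[OF \<open>\<sigma> \<in> behav1 T\<close> that] weak2[OF BR2_feasible[OF planY_realY[OF that qq T1] T1] planX_realX[OF \<open>\<sigma> \<in> behav1 T\<close> pp T1] T1]
      by simp
  qed
  have inf_le: "(INF \<tau>\<in>behav2 T. gamma T p q M \<sigma> \<tau>) \<le> v" if "\<sigma> \<in> behav1 T" for \<sigma> :: "nat \<Rightarrow> 'k \<Rightarrow> 'a list \<Rightarrow> 'b list \<Rightarrow> 'a \<Rightarrow> real"
  proof -
    have "(INF \<tau>\<in>behav2 T. gamma T p q M \<sigma> \<tau>) \<le> gamma T p q M \<sigma> ts"
      by (rule cINF_lower[OF bddB[OF that] tsB])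
    also have "\<dots> \<le> v" unfolding gts[OF that] by (rule K2[OF planX_realX[OF that pp T1]])
    finally show ?thesis .
  qed
  have sup_ge: "v \<le> (SUP \<sigma>\<in>behav1 T. gamma T p q M \<sigma> \<tau>)" if "\<tau> \<in> behav2 T" for \<tau> :: "nat \<Rightarrow> 'l \<Rightarrow> 'a list \<Rightarrow> 'b list \<Rightarrow> 'b \<Rightarrow> real"
  proof -
    have "v \<le> gamma T p q M ss \<tau>" unfolding gss[OF that] by (rule K1[OF planY_realY[OF that qq T1]])
    also have "\<dots> \<le> (SUP \<sigma>\<in>behav1 T. gamma T p q M \<sigma> \<tau>)"
      by (rule cSUP_upper[OF ssB bddA[OF that]])
    finally show ?thesis .
  qed
  have inf_ss: "v \<le> (INF \<tau>\<in>behav2 T. gamma T p q M ss \<tau>)"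
  proof (rule cINF_greatest)
    show "(behav2 T :: (nat \<Rightarrow> 'l \<Rightarrow> 'a list \<Rightarrow> 'b list \<Rightarrow> 'b \<Rightarrow> real) set) \<noteq> {}" using tsB by auto
    fix \<tau> :: "nat \<Rightarrow> 'l \<Rightarrow> 'a list \<Rightarrow> 'b list \<Rightarrow> 'b \<Rightarrow> real" assume U: "\<tau> \<in> behav2 T"
    show "v \<le> gamma T p q M ss \<tau>" unfolding gss[OF U] by (rule K1[OF planY_realY[OF U qq T1]])
  qed
  have sup_ts: "(SUP \<sigma>\<in>behav1 T. gamma T p q M \<sigma> ts) \<le> v"
  proof (rule cSUP_least)
    show "(behav1 T :: (nat \<Rightarrow> 'k \<Rightarrow> 'a list \<Rightarrow> 'b list \<Rightarrow> 'a \<Rightarrow> real) set) \<noteq> {}" using ssB by auto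
    fix \<sigma> :: "nat \<Rightarrow> 'k \<Rightarrow> 'a list \<Rightarrow> 'b list \<Rightarrow> 'a \<Rightarrow> real" assume S: "\<sigma> \<in> behav1 T"
    show "gamma T p q M \<sigma> ts \<le> v" unfolding gts[OF S] by (rule K2[OF planX_realX[OF S pp T1]])
  qed
  have bddI: "bdd_above ((\<lambda>\<sigma>. INF \<tau>\<in>behav2 T. gamma T p q M \<sigma> \<tau>) ` behav1 T)"
  proof (rule bdd_aboveI2[where M=v])
    fix \<sigma> :: "nat \<Rightarrow> 'k \<Rightarrow> 'a list \<Rightarrow> 'b list \<Rightarrow> 'a \<Rightarrow> real" assume S: "\<sigma> \<in> behav1 T"
    show "(INF \<tau>\<in>behav2 T. gamma T p q M \<sigma> \<tau>) \<le> v" by (rule inf_le[OF S])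
  qed
  have bddS: "bdd_below ((\<lambda>\<tau>. SUP \<sigma>\<in>behav1 T. gamma T p q M \<sigma> \<tau>) ` behav2 T)"
  proof (rule bdd_belowI2[where m=v])
    fix \<tau> :: "nat \<Rightarrow> 'l \<Rightarrow> 'a list \<Rightarrow> 'b list \<Rightarrow> 'b \<Rightarrow> real" assume U: "\<tau> \<in> behav2 T"
    show "v \<le> (SUP \<sigma>\<in>behav1 T. gamma T p q M \<sigma> \<tau>)" by (rule sup_ge[OF U])
  qed
  have VM: "val_maxmin T p q M = v"
  proof (rule antisym)
    show "val_maxmin T p q M \<le> v" unfolding val_maxmin_def
    proof (rule cSUP_least)
      show "(behav1 T :: (nat \<Rightarrow> 'k \<Rightarrow> 'a list \<Rightarrow> 'b list \<Rightarrow> 'a \<Rightarrow> real) set) \<noteq> {}" using ssB by auto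
      fix \<sigma> :: "nat \<Rightarrow> 'k \<Rightarrow> 'a list \<Rightarrow> 'b list \<Rightarrow> 'a \<Rightarrow> real" assume S: "\<sigma> \<in> behav1 T"
      show "(INF \<tau>\<in>behav2 T. gamma T p q M \<sigma> \<tau>) \<le> v" by (rule inf_le[OF S])
    qed
    have "v \<le> (INF \<tau>\<in>behav2 T. gamma T p q M ss \<tau>)" by (rule inf_ss)
    also have "\<dots> \<le> val_maxmin T p q M" unfolding val_maxmin_def
      by (rule cSUP_upper[OF ssB bddI])
    finally show "v \<le> val_maxmin T p q M" .
  qed
  have VN: "val_minmax T p q M = v"
  proof (rule antisym)
    show "v \<le> val_minmax T p q M" unfolding val_minmax_def
    proof (rule cINF_greatest)
      show "(behav2 T :: (nat \<Rightarrow> 'l \<Rightarrow> 'a list \<Rightarrow> 'b list \<Rightarrow> 'b \<Rightarrow> real) set) \<noteq> {}" using tsB by auto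
      fix \<tau> :: "nat \<Rightarrow> 'l \<Rightarrow> 'a list \<Rightarrow> 'b list \<Rightarrow> 'b \<Rightarrow> real" assume U: "\<tau> \<in> behav2 T"
      show "v \<le> (SUP \<sigma>\<in>behav1 T. gamma T p q M \<sigma> \<tau>)" by (rule sup_ge[OF U])
    qed
    have "val_minmax T p q M \<le> (SUP \<sigma>\<in>behav1 T. gamma T p q M \<sigma> ts)" unfolding val_minmax_def
      by (rule cINF_lower[OF bddS tsB])
    also have "\<dots> \<le> v" by (rule sup_ts)
    finally show "val_minmax T p q M \<le> v" .
  qed
  show ?thesis
  proof (intro conjI allI impI ballI)
    show "\<exists>x u0 u. lp1_feasible T p M x u0 u \<and> lp1_obj q u0 = val_maxmin T p q M"
      using F1 obj1 VM by (intro exI[of _ xs] exI[of _ u0s] exI[of _ us]) simp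
  next
    fix x u0 u assume F: "lp1_feasible T p M x u0 u"
    have X: "realX T p x" using F unfolding lp1_feasible_def by blast
    show "lp1_obj q u0 \<le> val_maxmin T p q M" using weak1[OF F Ys T1] K2[OF X] VM by linarith
  next
    fix x u0 u \<sigma>
    assume H: "lp1_feasible T p M x u0 u \<and>
        (\<forall>x' u0' u'. lp1_feasible T p M x' u0' u' \<longrightarrow> lp1_obj q u0' \<le> lp1_obj q u0)"
      and S: "\<sigma> \<in> behav1 T" and I: "induced1 T p x \<sigma>"
    have F: "lp1_feasible T p M x u0 u" using H by blast
    have X: "realX T p x" using F unfolding lp1_feasible_def by blast
    have opt: "v \<le> lp1_obj q u0" using H[THEN conjunct2, rule_format, OF F1] obj1 by linarith
    have "v \<le> (INF \<tau>\<in>behav2 T. gamma T p q M \<sigma> \<tau>)"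
    proof (rule cINF_greatest)
      show "(behav2 T :: (nat \<Rightarrow> 'l \<Rightarrow> 'a list \<Rightarrow> 'b list \<Rightarrow> 'b \<Rightarrow> real) set) \<noteq> {}" using tsB by auto
      fix \<tau> :: "nat \<Rightarrow> 'l \<Rightarrow> 'a list \<Rightarrow> 'b list \<Rightarrow> 'b \<Rightarrow> real" assume U: "\<tau> \<in> behav2 T"
      have "gamma T p q M \<sigma> \<tau> = G T M x (planY q \<tau>)"
        unfolding gamma_G[OF S U] by (rule agreeX[OF X I])
      also have "\<dots> \<ge> lp1_obj q u0" by (rule weak1[OF F planY_realY[OF U qq T1] T1])
      finally show "v \<le> gamma T p q M \<sigma> \<tau>" using opt by linarith
    qed
    then have "(INF \<tau>\<in>behav2 T. gamma T p q M \<sigma> \<tau>) = v" using inf_le[OF S] by linarith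
    then show "security1 T p q M \<sigma>" unfolding security1_def using S VM by simp
  next
    show "\<exists>y w0 w. lp2_feasible T q M y w0 w \<and> lp2_obj p w0 = val_maxmin T p q M"
      using F2 obj2 VM by (intro exI[of _ ys] exI[of _ w0s] exI[of _ ws]) simp
  next
    fix y w0 w assume F: "lp2_feasible T q M y w0 w"
    have Y: "realY T q y" using F unfolding lp2_feasible_def by blast
    show "val_maxmin T p q M \<le> lp2_obj p w0" using weak2[OF F Xs T1] K1[OF Y] VM by linarith
  next
    fix y w0 w \<tau>
    assume H: "lp2_feasible T q M y w0 w \<and>
        (\<forall>y' w0' w'. lp2_feasible T q M y' w0' w' \<longrightarrow> lp2_obj p w0 \<le> lp2_obj p w0')"
      and U: "\<tau> \<in> behav2 T" and I: "induced2 T q y \<tau>"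
    have F: "lp2_feasible T q M y w0 w" using H by blast
    have Y: "realY T q y" using F unfolding lp2_feasible_def by blast
    have opt: "lp2_obj p w0 \<le> v" using H[THEN conjunct2, rule_format, OF F2] obj2 by linarith
    have "(SUP \<sigma>\<in>behav1 T. gamma T p q M \<sigma> \<tau>) \<le> v"
    proof (rule cSUP_least)
      show "(behav1 T :: (nat \<Rightarrow> 'k \<Rightarrow> 'a list \<Rightarrow> 'b list \<Rightarrow> 'a \<Rightarrow> real) set) \<noteq> {}" using ssB by auto
      fix \<sigma> :: "nat \<Rightarrow> 'k \<Rightarrow> 'a list \<Rightarrow> 'b list \<Rightarrow> 'a \<Rightarrow> real" assume S: "\<sigma> \<in> behav1 T"
      have "gamma T p q M \<sigma> \<tau> = G T M (planX p \<sigma>) y"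
        unfolding gamma_G[OF S U] by (rule agreeY[OF Y I])
      also have "\<dots> \<le> lp2_obj p w0" by (rule weak2[OF F planX_realX[OF S pp T1] T1])
      finally show "gamma T p q M \<sigma> \<tau> \<le> v" using opt by linarith
    qed
    then have "(SUP \<sigma>\<in>behav1 T. gamma T p q M \<sigma> \<tau>) = v" using sup_ge[OF U] by linarith
    then show "security2 T p q M \<tau>" unfolding security2_def using U VN by simp
  qed
qed


end
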